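(* Fix a round $t$ and the graph $G$ described in the context. Run the simulated annealing chain described in the context, and let $\mathcal{J}\subseteq\mathbb{V}$ be the set of vertices of maximal energy $E$. Then $$\lim_{j\to\infty}\mathbb{P}(\mathcal{V}_j\in\mathcal{J})=1.$$
   Context: Setting: users $\mathbb{K}=\{1,\dots,K\}$, with $1\le m<K$. At the fixed round $t$ each user has real values $u_k=\mathrm{ucb}(k,t-1)$, $g_k(t-1)$, $p_k(t-1)$, with ties in $u$ broken by a fixed total order. $\Phi_{\rm g}$ and $\Phi_{\rm p}$ are bounded functions of $(\{g_k(t-1)\}_{k\in\mathcal{V}},\mathcal{V})$ and $(\{p_k(t-1)\}_{k\in\mathcal{V}},\mathcal{V})$ respectively, with ranges $\Delta_{\Phi_{\rm g}},\Delta_{\Phi_{\rm p}}$. The constants satisfy $\alpha,\gamma>0$. Energy: for an $m$-set $\mathcal{V}$, $$E(\mathcal{V})=\min_{k\in\mathcal{V}}u_k+\alpha\Phi_{\rm g}(\{g_k(t-1)\}_{k\in\mathcal{V}},\mathcal{V})+\gamma\Phi_{\rm p}(\{p_k(t-1)\}_{k\in\mathcal{V}},\mathcal{V}).$$ Graph: the vertex set $\mathbb{V}$ consists of all $m$-subsets of $\mathbb{K}$. $\mathcal{U}$ is an active neighbor of $\mathcal{V}$ if $|\mathcal{V}\cap\mathcal{U}|=m-1$ and the element of $\mathcal{V}\setminus\mathcal{U}$ is $\arg\min_{k\in\mathcal{V}}u_k$. $\mathcal{V}$ and $\mathcal{U}$ are neighbors if one is an active neighbor of the other. $\mathcal{N}_{\mathcal{V}}$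 denotes the neighbor set of $\mathcal{V}$. Temperature: let $k_m$ be the user with the $m$-th largest $u$, and set $C=u_{k_m}-\min_{k'\in\mathbb{K}}u_{k'}+\alpha\Delta_{\Phi_{\rm g}}+\gamma\Delta_{\Phi_{\rm p}}$. The temperature at iteration $j$ is $\tau_j=C/\log(j+1)$. Simulated annealing chain: - $\mathcal{V}_1\in\mathbb{V}$ is arbitrary. - At iteration $j$, sample $\mathcal{U}$ uniformly from $\mathcal{N}_{\mathcal{V}_j}$. - If $E(\mathcal{U})\ge E(\mathcal{V}_j)$, set $\mathcal{V}_{j+1}=\mathcal{U}$. - Otherwise, set $\mathcal{V}_{j+1}=\mathcal{U}$ with probability $\exp\!\big(-(E(\mathcal{V}_j)-E(\mathcal{U}))/\tau_j\big)$, and $\mathcal{V}_{j+1}=\mathcal{V}_j$ with the remaining probability. *)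

theory Defs
  imports "HOL-Probability.Probability" "HOL-Library.FuncSet"
begin

definition vertices :: "nat \<Rightarrow> nat \<Rightarrow> nat set set" where
  "vertices K m = {V. V \<subseteq> {1..K} \<and> card V = m}"

definition energy ::
  "(nat \<Rightarrow> real) \<Rightarrow> (nat \<Rightarrow> real) \<Rightarrow> (nat \<Rightarrow> real) \<Rightarrow>
   ((nat \<Rightarrow> real) \<Rightarrow> nat set \<Rightarrow> real) \<Rightarrow> ((nat \<Rightarrow> real) \<Rightarrow> nat set \<Rightarrow> real) \<Rightarrow>
   real \<Rightarrow> real \<Rightarrow> nat set \<Rightarrow> real" where
  "energy u g p Phig Phip \<alpha> \<gamma> V =
     Min (u ` V) + \<alpha> * Phig (restrict g V) V + \<gamma> * Phip (restrict p V) V"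

text \<open>Argmin of u over V, ties broken by the fixed total order given by an injective
  rk function: k precedes k' iff (u k, rk k) is lexicographically smaller.\<close>
definition argmin_u :: "(nat \<Rightarrow> real) \<Rightarrow> (nat \<Rightarrow> nat) \<Rightarrow> nat set \<Rightarrow> nat" where
  "argmin_u u rk V = (THE k. k \<in> V \<and>
      (\<forall>k'\<in>V. k' \<noteq> k \<longrightarrow> u k < u k' \<or> (u k = u k' \<and> rk k < rk k')))"

definition active_nbr :: "(nat \<Rightarrow> real) \<Rightarrow> (nat \<Rightarrow> nat) \<Rightarrow> nat \<Rightarrow> nat set \<Rightarrow> nat set \<Rightarrow> bool" where
  "active_nbr u rk m V U \<longleftrightarrow> card (V \<inter> U) = m - 1 \<and> V - U = {argmin_u u rk V}"

definition nbrs :: "(nat \<Rightarrow> real) \<Rightarrow> (nat \<Rightarrow> nat) \<Rightarrow> nat \<Rightarrow> nat \<Rightarrow> nat set \<Rightarrow> nat set set" where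
  "nbrs u rk K m V = {U \<in> vertices K m. active_nbr u rk m V U \<or> active_nbr u rk m U V}"

definition fun_range_width :: "((nat \<Rightarrow> real) \<Rightarrow> nat set \<Rightarrow> real) \<Rightarrow> real" where
  "fun_range_width Phi = (SUP x. case_prod Phi x) - (INF x. case_prod Phi x)"

text \<open>Value u_{k_m}: the m-th largest of u 1, ..., u K (with multiplicity).\<close>
definition mth_largest :: "(nat \<Rightarrow> real) \<Rightarrow> nat \<Rightarrow> nat \<Rightarrow> real" where
  "mth_largest u K m = rev (sort (map u [1..<K+1])) ! (m - 1)"

definition temp_const ::
  "(nat \<Rightarrow> real) \<Rightarrow> nat \<Rightarrow> nat \<Rightarrow>
   ((nat \<Rightarrow> real) \<Rightarrow> nat set \<Rightarrow> real) \<Rightarrow> ((nat \<Rightarrow> real) \<Rightarrow> nat set \<Rightarrow> real) \<Rightarrow>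
   real \<Rightarrow> real \<Rightarrow> real" where
  "temp_const u K m Phig Phip \<alpha> \<gamma> =
     mth_largest u K m - Min (u ` {1..K}) + \<alpha> * fun_range_width Phig + \<gamma> * fun_range_width Phip"

definition temperature :: "real \<Rightarrow> nat \<Rightarrow> real" where
  "temperature C j = C / ln (real j + 1)"

definition sa_step :: "(nat set \<Rightarrow> real) \<Rightarrow> (nat set \<Rightarrow> nat set set) \<Rightarrow> real \<Rightarrow>
    nat set \<Rightarrow> nat set pmf" where
  "sa_step E N tau V = do {
     U \<leftarrow> pmf_of_set (N V);
     if E U \<ge> E V then return_pmf U
     else map_pmf (\<lambda>b. if b then U else V) (bernoulli_pmf (exp (- (E V - E U) / tau)))
   }"

text \<open>Law of V_j (j \<ge> 1), starting from V_1 = V1.\<close>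
fun sa_law :: "(nat set \<Rightarrow> real) \<Rightarrow> (nat set \<Rightarrow> nat set set) \<Rightarrow> real \<Rightarrow> nat set \<Rightarrow>
    nat \<Rightarrow> nat set pmf" where
  "sa_law E N C V1 0 = return_pmf V1"
| "sa_law E N C V1 (Suc 0) = return_pmf V1"
| "sa_law E N C V1 (Suc (Suc j)) =
     sa_law E N C V1 (Suc j) \<bind> sa_step E N (temperature C (Suc j))"

end

theory Submission imports Defs begin


lemma var_identity:
  fixes p phi :: "'a \<Rightarrow> real"
  assumes "finite A" "(\<Sum>a\<in>A. p a) = 1"
  shows "(\<Sum>a\<in>A. p a * phi a)^2 = (\<Sum>a\<in>A. p a * phi a ^ 2)
          - (1/2) * (\<Sum>a\<in>A. \<Sum>b\<in>A. p a * p b * (phi a - phi b)^2)"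
proof -
  have "(\<Sum>a\<in>A. \<Sum>b\<in>A. p a * p b * (phi a - phi b)^2)
     = (\<Sum>a\<in>A. \<Sum>b\<in>A. p b * (p a * phi a ^ 2) + p a * (p b * phi b ^ 2) - 2 * (p a * phi a) * (p b * phi b))"
    by (intro sum.cong refl) (simp add: power2_eq_square algebra_simps)
  also have "\<dots> = (\<Sum>b\<in>A. p b) * (\<Sum>a\<in>A. p a * phi a ^ 2) + (\<Sum>a\<in>A. p a) * (\<Sum>b\<in>A. p b * phi b ^ 2)
       - 2 * ((\<Sum>a\<in>A. p a * phi a) * (\<Sum>b\<in>A. p b * phi b))"
  proof -
    have 1: "(\<Sum>a\<in>A. \<Sum>b\<in>A. p b * (p a * phi a ^ 2)) = (\<Sum>b\<in>A. p b) * (\<Sum>a\<in>A. p a * phi a ^ 2)"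
      by (simp add: sum_distrib_left sum_distrib_right)
    have 2: "(\<Sum>a\<in>A. \<Sum>b\<in>A. p a * (p b * phi b ^ 2)) = (\<Sum>a\<in>A. p a) * (\<Sum>b\<in>A. p b * phi b ^ 2)"
      by (simp only: sum_product)
    have 3: "(\<Sum>a\<in>A. \<Sum>b\<in>A. 2 * (p a * phi a) * (p b * phi b)) = 2 * ((\<Sum>a\<in>A. p a * phi a) * (\<Sum>b\<in>A. p b * phi b))"
      by (simp add: sum_product sum_distrib_left[symmetric] mult.assoc)
    show ?thesis
      by (simp only: sum.distrib sum_subtractf 1 2 3)
  qed
  finally have "(\<Sum>a\<in>A. \<Sum>b\<in>A. p a * p b * (phi a - phi b)^2) = 2 * (\<Sum>a\<in>A. p a * phi a ^ 2) - 2 * (\<Sum>a\<in>A. p a * phi a)^2"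
    using assms(2) by (simp add: power2_eq_square)
  then show ?thesis by linarith
qed

lemma jensen_sq:
  fixes p phi :: "'a \<Rightarrow> real"
  assumes "finite A" "(\<Sum>a\<in>A. p a) = 1" "\<And>a. a \<in> A \<Longrightarrow> p a \<ge> 0"
  shows "(\<Sum>a\<in>A. p a * phi a)^2 \<le> (\<Sum>a\<in>A. p a * phi a ^ 2)"
proof -
  have "0 \<le> (\<Sum>a\<in>A. \<Sum>b\<in>A. p a * p b * (phi a - phi b)^2)"
    using assms(3) by (intro sum_nonneg mult_nonneg_nonneg) auto
  then show ?thesis using var_identity[OF assms(1,2), of phi] by linarith
qed

lemma bounded_growth:
  fixes a c :: "nat \<Rightarrow> real"
  assumes rec: "\<And>n. n \<ge> n0 \<Longrightarrow> a (Suc n) \<le> a n * (1 + c n)"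
    and c0: "\<And>n. c n \<ge> 0" and a0: "\<And>n. a n \<ge> 0" and sm: "summable c"
  shows "\<And>n. n \<ge> n0 \<Longrightarrow> a n \<le> a n0 * exp (suminf c)"
proof -
  have main: "a n \<le> a n0 * exp (\<Sum>i\<in>{n0..<n}. c i)" if "n \<ge> n0" for n
    using that
  proof (induction n rule: dec_induct)
    case base then show ?case by simp
  next
    case (step n)
    have "a (Suc n) \<le> a n * (1 + c n)" using rec step.hyps by simp
    also have "\<dots> \<le> a n * exp (c n)" using a0[of n] by (intro mult_left_mono) (auto simp: exp_ge_add_one_self add.commute)
    also have "\<dots> \<le> a n0 * exp (\<Sum>i\<in>{n0..<n}. c i) * exp (c n)"
      using step.IH by (intro mult_right_mono) auto
    also have "\<dots> = a n0 * exp (\<Sum>i\<in>{n0..<Suc n}. c i)"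
      using step.hyps by (simp add: exp_add mult.assoc)
    finally show ?case .
  qed
  fix n assume n: "n \<ge> n0"
  have "(\<Sum>i\<in>{n0..<n}. c i) \<le> suminf c"
    by (rule sum_le_suminf[OF sm]) (use c0 in auto)
  then have "a n0 * exp (\<Sum>i\<in>{n0..<n}. c i) \<le> a n0 * exp (suminf c)"
    using a0[of n0] by (intro mult_left_mono) auto
  then show "a n \<le> a n0 * exp (suminf c)" using main[OF n] by linarith
qed

lemma L2_identity:
  fixes P :: "'a \<Rightarrow> 'a \<Rightarrow> real" and pi phi :: "'a \<Rightarrow> real"
  assumes fin: "finite S" and rows: "\<And>x. x\<in>S \<Longrightarrow> (\<Sum>y\<in>S. P x y) = 1"
   and rev: "\<And>x y. x \<in> S \<Longrightarrow> y \<in> S \<Longrightarrow> pi x * P x y = pi y * P y x"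
  shows "(\<Sum>y\<in>S. pi y * (\<Sum>a\<in>S. P y a * phi a)^2) = (\<Sum>x\<in>S. pi x * phi x ^2)
     - (1/2) * (\<Sum>y\<in>S. \<Sum>a\<in>S. \<Sum>b\<in>S. pi y * P y a * P y b * (phi a - phi b)^2)"
proof -
  have "(\<Sum>y\<in>S. pi y * (\<Sum>a\<in>S. P y a * phi a)^2) =
     (\<Sum>y\<in>S. pi y * (\<Sum>a\<in>S. P y a * phi a ^ 2) - pi y * ((1/2) * (\<Sum>a\<in>S. \<Sum>b\<in>S. P y a * P y b * (phi a - phi b)^2)))"
    by (intro sum.cong refl) (simp add: var_identity[OF fin rows] right_diff_distrib)
  also have "\<dots> = (\<Sum>y\<in>S. pi y * (\<Sum>a\<in>S. P y a * phi a ^ 2)) - (\<Sum>y\<in>S. pi y * ((1/2) * (\<Sum>a\<in>S. \<Sum>b\<in>S. P y a * P y b * (phi a - phi b)^2)))"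
    by (rule sum_subtractf)
  also have "(\<Sum>y\<in>S. pi y * (\<Sum>a\<in>S. P y a * phi a ^ 2)) = (\<Sum>y\<in>S. \<Sum>a\<in>S. pi y * P y a * phi a ^ 2)"
    by (simp add: sum_distrib_left mult.assoc)
  also have "\<dots> = (\<Sum>a\<in>S. \<Sum>y\<in>S. pi y * P y a * phi a ^ 2)"
    by (rule sum.swap)
  also have "\<dots> = (\<Sum>a\<in>S. \<Sum>y\<in>S. pi a * phi a ^ 2 * P a y)"
    by (intro sum.cong refl) (simp add: rev)
  also have "\<dots> = (\<Sum>a\<in>S. pi a * phi a ^ 2)"
    by (intro sum.cong refl) (simp add: sum_distrib_left[symmetric] rows)
  also have "(\<Sum>y\<in>S. pi y * ((1/2) * (\<Sum>a\<in>S. \<Sum>b\<in>S. P y a * P y b * (phi a - phi b)^2)))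
     = (1/2) * (\<Sum>y\<in>S. \<Sum>a\<in>S. \<Sum>b\<in>S. pi y * P y a * P y b * (phi a - phi b)^2)"
    by (simp add: sum_distrib_left mult.assoc mult.left_commute)
  finally show ?thesis .
qed


locale sa =
  fixes S :: "nat set set" and N :: "nat set \<Rightarrow> nat set set" and E :: "nat set \<Rightarrow> real" and C :: real
  assumes finS: "finite S"
    and N_sub: "\<And>x. x \<in> S \<Longrightarrow> N x \<subseteq> S"
    and N_ne: "\<And>x. x \<in> S \<Longrightarrow> N x \<noteq> {}"
    and N_sym: "\<And>x y. x \<in> S \<Longrightarrow> y \<in> S \<Longrightarrow> y \<in> N x \<longleftrightarrow> x \<in> N y"
    and N_irr: "\<And>x. x \<in> S \<Longrightarrow> x \<notin> N x"
    and E_range: "\<And>x y. x \<in> S \<Longrightarrow> y \<in> S \<Longrightarrow> E x - E y \<le> C"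
    and Cpos: "C > 0"
    and Sne: "S \<noteq> {}"
    and conn: "\<And>x y. x \<in> S \<Longrightarrow> y \<in> S \<Longrightarrow> (\<lambda>a b. a \<in> S \<and> b \<in> N a)\<^sup>*\<^sup>* x y"
begin

definition L :: "nat \<Rightarrow> real" where "L n = ln (real n + 1) / C"
definition P :: "nat \<Rightarrow> nat set \<Rightarrow> nat set \<Rightarrow> real" where
  "P n x y = pmf (sa_step E N (temperature C n) x) y"
definition deg :: "nat set \<Rightarrow> real" where "deg x = real (card (N x))"
definition acc :: "nat \<Rightarrow> nat set \<Rightarrow> nat set \<Rightarrow> real" where
  "acc n x y = exp (- L n * max 0 (E x - E y))"

lemma finN: "x \<in> S \<Longrightarrow> finite (N x)"
  using finS N_sub finite_subset by blast

lemma deg_pos: "x \<in> S \<Longrightarrow> deg x > 0"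
  using finN N_ne by (simp add: deg_def card_gt_0_iff)

lemma L_pos: "n \<ge> 1 \<Longrightarrow> L n > 0"
  using Cpos by (simp add: L_def)

lemma acc_le1: "n \<ge> 1 \<Longrightarrow> acc n x y \<le> 1"
  using L_pos[of n] by (simp add: acc_def mult_nonneg_nonneg)

lemma acc_pos: "acc n x y > 0" by (simp add: acc_def)

lemma step_pmf_branch:
  assumes "x \<in> S" "U \<in> N x" "n \<ge> 1" "y \<noteq> x"
  shows "pmf (if E U \<ge> E x then return_pmf U
     else map_pmf (\<lambda>b. if b then U else x) (bernoulli_pmf (exp (- (E x - E U) / temperature C n)))) y
     = (if y = U then acc n x U else 0)"
proof -
  have Ux: "U \<noteq> x" using assms N_irr by auto
  have tmp: "- (E x - E U) / temperature C n = - L n * max 0 (E x - E U)" if "E U < E x"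
    using that Cpos assms(3) by (simp add: temperature_def L_def field_simps)
  show ?thesis
  proof (cases "E U \<ge> E x")
    case True
    then show ?thesis by (auto simp: acc_def indicator_def)
  next
    case False
    let ?p = "exp (- (E x - E U) / temperature C n)"
    have p: "?p = acc n x U" using tmp False by (simp add: acc_def)
    have p01: "0 \<le> ?p" "?p \<le> 1" using p acc_le1[OF assms(3)] acc_pos[of n x U] by auto
    have inj: "inj (\<lambda>b. if b then U else x)" using Ux by (auto simp: inj_def split: if_splits)
    show ?thesis
    proof (cases "y = U")
      case True
      have "pmf (map_pmf (\<lambda>b. if b then U else x) (bernoulli_pmf ?p)) ((\<lambda>b. if b then U else x) True)
          = pmf (bernoulli_pmf ?p) True" by (rule pmf_map_inj'[OF inj])
      then show ?thesis using False True p p01 by simp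
    next
      case yU: False
      have "pmf (map_pmf (\<lambda>b. if b then U else x) (bernoulli_pmf ?p)) y = 0"
        by (rule pmf_map_outside) (use yU assms(4) in auto)
      then show ?thesis using False yU by simp
    qed
  qed
qed

lemma P_off:
  assumes "x \<in> S" "n \<ge> 1" "y \<noteq> x"
  shows "P n x y = (if y \<in> N x then acc n x y / deg x else 0)"
proof -
  have "P n x y = (\<Sum>U\<in>N x. (if y = U then acc n x U else 0)) / deg x"
    unfolding P_def sa_step_def deg_def
    by (subst pmf_bind_pmf_of_set) (use N_ne finN assms step_pmf_branch in auto)
  also have "\<dots> = (if y \<in> N x then acc n x y / deg x else 0)"
    using finN[OF assms(1)] by (simp add: sum.delta)
  finally show ?thesis .
qed

lemma set_step: "x \<in> S \<Longrightarrow> set_pmf (sa_step E N \<tau> x) \<subseteq> S"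
  unfolding sa_step_def using N_sub[of x] N_ne[of x] finN[of x]
  by (auto split: if_splits)

lemma P_nonneg: "P n x y \<ge> 0" by (simp add: P_def)

lemma P_rowsum: "x \<in> S \<Longrightarrow> (\<Sum>y\<in>S. P n x y) = 1"
  unfolding P_def by (rule sum_pmf_eq_1[OF finS set_step])

lemma law_set: "V1 \<in> S \<Longrightarrow> set_pmf (sa_law E N C V1 n) \<subseteq> S"
proof (induction n rule: nat_less_induct)
  case (1 n)
  show ?case
  proof (cases n)
    case 0 then show ?thesis using 1 by simp
  next
    case (Suc j)
    show ?thesis
    proof (cases j)
      case 0 then show ?thesis using 1 Suc by simp
    next
      case (Suc i)
      have IH: "set_pmf (sa_law E N C V1 (Suc i)) \<subseteq> S" using 1 \<open>n = Suc j\<close> Suc by auto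
      show ?thesis using IH set_step \<open>n = Suc j\<close> Suc by (auto simp: set_bind_pmf)
    qed
  qed
qed

lemma law_rec:
  assumes "V1 \<in> S" "n \<ge> 1"
  shows "pmf (sa_law E N C V1 (Suc n)) y = (\<Sum>x\<in>S. pmf (sa_law E N C V1 n) x * P n x y)"
proof -
  obtain j where j: "n = Suc j" using assms(2) by (cases n) auto
  have "pmf (sa_law E N C V1 (Suc n)) y = (LINT x|sa_law E N C V1 n. P n x y)"
    unfolding j by (simp add: pmf_bind P_def)
  also have "\<dots> = (\<Sum>x\<in>S. pmf (sa_law E N C V1 n) x *\<^sub>R P n x y)"
    by (rule integral_measure_pmf[OF finS]) (use law_set[OF assms(1)] in auto)
  finally show ?thesis by simp
qed

definition Emax :: real where "Emax = Max (E ` S)"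
definition h :: "nat set \<Rightarrow> real" where "h x = Emax - E x"
definition pt :: "nat \<Rightarrow> nat set \<Rightarrow> real" where "pt n x = deg x * exp (- L n * h x)"

lemma pt_pos: "x \<in> S \<Longrightarrow> pt n x > 0"
  using deg_pos by (simp add: pt_def)

lemma rev:
  assumes "x \<in> S" "y \<in> S" "n \<ge> 1"
  shows "pt n x * P n x y = pt n y * P n y x"
proof (cases "x = y")
  case True then show ?thesis by simp
next
  case False
  have key: "exp (- L n * h x) * acc n x y = exp (- L n * h y) * acc n y x"
  proof -
    have "- L n * h x + - L n * max 0 (E x - E y) = - L n * h y + - L n * max 0 (E y - E x)"
      by (simp add: h_def max_def algebra_simps)
    then show ?thesis by (simp add: acc_def exp_add[symmetric])
  qed
  show ?thesis
    using False assms key deg_pos[OF assms(1)] deg_pos[OF assms(2)] N_sym[OF assms(1,2)]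
    by (simp add: P_off pt_def)
qed


lemma Emax_ex: "\<exists>x\<in>S. E x = Emax"
proof -
  have "Emax \<in> E ` S" unfolding Emax_def using finS Sne by (intro Max_in) auto
  then show ?thesis by (auto simp: image_iff)
qed

lemma E_le_Emax: "x \<in> S \<Longrightarrow> E x \<le> Emax"
  unfolding Emax_def using finS by auto

lemma h_nonneg: "x \<in> S \<Longrightarrow> h x \<ge> 0"
  using E_le_Emax by (simp add: h_def)

lemma h_le_C: "x \<in> S \<Longrightarrow> h x \<le> C"
proof -
  assume x: "x \<in> S"
  obtain z where "z \<in> S" "E z = Emax" using Emax_ex by auto
  then show ?thesis using E_range[of z x] x by (simp add: h_def)
qed

definition J :: "nat set set" where "J = {x \<in> S. h x = 0}"

lemma J_sub: "J \<subseteq> S" by (auto simp: J_def)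

lemma J_ex: "\<exists>j. j \<in> J"
  using Emax_ex by (auto simp: J_def h_def)

definition lazy :: "nat set \<Rightarrow> bool" where "lazy a \<longleftrightarrow> (\<exists>b\<in>N a. h b > h a)"

definition stp :: "nat set \<Rightarrow> nat set \<Rightarrow> bool" where
  "stp a b \<longleftrightarrow> (a \<in> S \<and> b \<in> N a \<and> (lazy a \<or> lazy b)) \<or> (\<exists>y\<in>S. \<not> lazy y \<and> a \<in> N y \<and> b \<in> N y)"

lemma conv_pow:
  "\<And>x. x \<in> S \<Longrightarrow> j \<in> J \<Longrightarrow> ((\<lambda>a b. a \<in> S \<and> b \<in> N a) ^^ k) x j \<Longrightarrow> \<exists>j'\<in>J. stp\<^sup>*\<^sup>* x j'"
proof (induction k rule: less_induct)
  case (less k x)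
  let ?G = "\<lambda>a b. a \<in> S \<and> b \<in> N a"
  have xS: "x \<in> S" and jJ: "j \<in> J" and pw: "(?G ^^ k) x j" using less.prems by blast+
  show ?case
  proof (cases k)
    case 0
    then have "x = j" using pw by simp
    then show ?thesis using jJ by blast
  next
    case (Suc k')
    have pw': "(?G ^^ Suc k') x j" using pw Suc by simp
    obtain x1 where x1: "?G x x1" "(?G ^^ k') x1 j" using relpowp_Suc_D2[OF pw'] by blast
    have x1S: "x1 \<in> S" using x1(1) N_sub by blast
    have xN1: "x \<in> N x1" using x1(1) N_sym xS x1S by blast
    show ?thesis
    proof (cases "lazy x \<or> lazy x1")
      case True
      then have st: "stp x x1" using x1(1) unfolding stp_def by blast
      have "k' < k" using Suc by simp
      then obtain j' where "j' \<in> J" "stp\<^sup>*\<^sup>* x1 j'" using less.IH x1S jJ x1(2) by blast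
      then show ?thesis using st by (meson converse_rtranclp_into_rtranclp)
    next
      case False
      show ?thesis
      proof (cases k')
        case 0
        then have "x1 = j" using x1(2) by simp
        then have "h x1 = 0" using jJ by (simp add: J_def)
        moreover have "\<not> h x > h x1" using False xN1 unfolding lazy_def by blast
        ultimately have "h x \<le> 0" by simp
        then have "x \<in> J" using h_nonneg[OF xS] xS by (simp add: J_def)
        then show ?thesis by blast
      next
        case (Suc k'')
        have pw'': "(?G ^^ Suc k'') x1 j" using x1(2) Suc by simp
        obtain x2 where x2: "?G x1 x2" "(?G ^^ k'') x2 j" using relpowp_Suc_D2[OF pw''] by blast
        have x2S: "x2 \<in> S" using x2(1) N_sub by blast
        have st: "stp x x2" using x2(1) x1S xN1 False unfolding stp_def by blast
        have "k'' < k" using Suc \<open>k = Suc k'\<close> by simp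
        then obtain j' where "j' \<in> J" "stp\<^sup>*\<^sup>* x2 j'" using less.IH x2S jJ x2(2) by blast
        then show ?thesis using st by (meson converse_rtranclp_into_rtranclp)
      qed
    qed
  qed
qed

lemma reach_J: "x \<in> S \<Longrightarrow> \<exists>j\<in>J. stp\<^sup>*\<^sup>* x j"
proof -
  assume x: "x \<in> S"
  obtain j where j: "j \<in> J" using J_ex by auto
  then have "(\<lambda>a b. a \<in> S \<and> b \<in> N a)\<^sup>*\<^sup>* x j" using conn x J_sub by auto
  then obtain k where "((\<lambda>a b. a \<in> S \<and> b \<in> N a) ^^ k) x j" using rtranclp_imp_relpowp by metis
  then show ?thesis using conv_pow x j by blast
qed


lemma L_mono: "L n \<le> L (Suc n)"
  using Cpos by (simp add: L_def divide_right_mono)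

lemma L_nonneg: "L n \<ge> 0"
  using Cpos by (simp add: L_def)

lemma expLC: "exp (L n * C) = real n + 1"
  using Cpos by (simp add: L_def)

lemma L_tendsto: "filterlim L at_top sequentially"
proof -
  have 1: "filterlim (\<lambda>n. 1 + real n) at_top sequentially"
    by (rule filterlim_tendsto_add_at_top[OF tendsto_const filterlim_real_sequentially])
  have 2: "filterlim (\<lambda>n. ln (1 + real n)) at_top sequentially"
    by (rule filterlim_compose[OF ln_at_top 1])
  have 3: "filterlim (\<lambda>n. (1/C) * ln (1 + real n)) at_top sequentially"
    by (rule filterlim_tendsto_pos_mult_at_top[OF tendsto_const _ 2]) (use Cpos in simp)
  show ?thesis using 3 by (simp add: L_def[abs_def] add.commute)
qed

lemma ev_exp_small:
  assumes "d > 0" "t > 0"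
  shows "eventually (\<lambda>n. exp (- L n * d) \<le> t) sequentially"
proof -
  have "eventually (\<lambda>n. - ln t / d \<le> L n) sequentially"
    using L_tendsto by (simp add: filterlim_at_top)
  then show ?thesis
  proof (rule eventually_mono)
    fix n assume "- ln t / d \<le> L n"
    then have "(- ln t / d) * d \<le> L n * d" using assms(1) by (intro mult_right_mono) auto
    then have "- ln t \<le> L n * d" using assms(1) by simp
    then have "exp (- L n * d) \<le> exp (ln t)" by simp
    then show "exp (- L n * d) \<le> t" using assms(2) by simp
  qed
qed

definition D2 :: "nat \<Rightarrow> (nat set \<Rightarrow> real) \<Rightarrow> real" where
  "D2 n f = (1/2) * (\<Sum>y\<in>S. \<Sum>a\<in>S. \<Sum>b\<in>S. pt n y * P n y a * P n y b * (f a - f b)^2)"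

lemma D2_term:
  assumes "y \<in> S" "a \<in> S" "b \<in> S"
  shows "pt n y * P n y a * P n y b * (f a - f b)^2 \<le> 2 * D2 n f"
proof -
  let ?t = "\<lambda>y a b. pt n y * P n y a * P n y b * (f a - f b)^2"
  have nn: "\<And>y a b. y \<in> S \<Longrightarrow> 0 \<le> ?t y a b"
    using pt_pos by (simp add: P_nonneg less_imp_le)
  have "?t y a b \<le> (\<Sum>b\<in>S. ?t y a b)"
    by (rule member_le_sum[OF assms(3)]) (simp_all add: nn assms finS)
  also have "\<dots> \<le> (\<Sum>a\<in>S. \<Sum>b\<in>S. ?t y a b)"
    by (rule member_le_sum[OF assms(2)]) (simp_all add: nn assms finS sum_nonneg)
  also have "\<dots> \<le> (\<Sum>y\<in>S. \<Sum>a\<in>S. \<Sum>b\<in>S. ?t y a b)"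
    by (rule member_le_sum[OF assms(1)]) (simp_all add: nn assms finS sum_nonneg)
  finally show ?thesis by (simp add: D2_def)
qed

lemma D2_nonneg: "D2 n f \<ge> 0"
  unfolding D2_def using pt_pos
  by (auto intro!: sum_nonneg mult_nonneg_nonneg simp: P_nonneg less_imp_le)

lemma deg_le: "x \<in> S \<Longrightarrow> deg x \<le> real (card S)"
  unfolding deg_def using N_sub finS by (simp add: card_mono)

lemma W1:
  assumes "n \<ge> 1" "y \<in> S" "\<not> lazy y" "a \<in> N y" "b \<in> N y"
  shows "pt n y * P n y a * P n y b \<ge> exp (- L n * C) / (2 * real (card S))"
proof -
  have ay: "a \<noteq> y" "b \<noteq> y" using assms N_irr by auto
  have "E a \<ge> E y" "E b \<ge> E y" using assms(3,4,5) by (auto simp: lazy_def h_def not_less)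
  then have acc1: "acc n y a = 1" "acc n y b = 1" by (auto simp: acc_def max_def)
  have dp: "deg y > 0" using deg_pos assms(2) by auto
  have "pt n y * P n y a * P n y b = exp (- L n * h y) / deg y"
    using ay assms acc1 dp by (simp add: P_off pt_def power2_eq_square field_simps)
  also have "exp (- L n * h y) \<ge> exp (- L n * C)"
    using h_le_C[OF assms(2)] L_nonneg[of n] by (simp add: mult_left_mono)
  then have "exp (- L n * h y) / deg y \<ge> exp (- L n * C) / real (card S)"
    using dp deg_le[OF assms(2)] by (meson exp_gt_zero frac_le less_imp_le)
  moreover have "exp (- L n * C) / real (card S) \<ge> exp (- L n * C) / (2 * real (card S))"
    using finS Sne by (simp add: card_gt_0_iff divide_left_mono)
  ultimately show ?thesis by linarith
qed

lemma W2:
  assumes "n \<ge> 1" "a \<in> S" "b \<in> N a"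
  shows "pt n a * P n a b \<ge> exp (- L n * C)"
proof -
  have ab: "b \<noteq> a" using assms N_irr by auto
  have bS: "b \<in> S" using assms N_sub by auto
  have dp: "deg a > 0" using deg_pos assms(2) by auto
  have "pt n a * P n a b = exp (- L n * h a) * acc n a b"
    using ab assms dp by (simp add: P_off pt_def)
  also have "\<dots> = exp (- L n * (h a + max 0 (E a - E b)))"
    by (simp add: acc_def exp_add[symmetric] algebra_simps)
  also have "h a + max 0 (E a - E b) \<le> C"
    using h_le_C[OF assms(2)] h_le_C[OF bS] by (simp add: h_def max_def)
  then have "exp (- L n * (h a + max 0 (E a - E b))) \<ge> exp (- L n * C)"
    using L_nonneg[of n] by (simp add: mult_left_mono)
  finally show ?thesis .
qed

lemma Paa_lower:
  assumes "a \<in> S" "z \<in> N a" "n \<ge> 1"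
  shows "P n a a \<ge> (1 - acc n a z) / deg a"
proof -
  have dp: "deg a > 0" using deg_pos assms(1) by auto
  have fN: "finite (N a)" using finN assms(1) .
  have NS: "N a \<subseteq> S - {a}" using N_sub N_irr assms(1) by auto
  have r: "(\<Sum>y\<in>S. P n a y) = 1" using P_rowsum assms(1) by simp
  have sp: "(\<Sum>y\<in>S. P n a y) = P n a a + (\<Sum>y\<in>S - {a}. P n a y)"
    by (rule sum.remove[OF finS assms(1)])
  have s1: "(\<Sum>y\<in>S - {a}. P n a y) = (\<Sum>y\<in>S - {a}. if y \<in> N a then acc n a y / deg a else 0)"
    by (rule sum.cong[OF refl]) (simp add: P_off[OF assms(1) assms(3)])
  have s2: "(\<Sum>y\<in>S - {a}. if y \<in> N a then acc n a y / deg a else 0) = (\<Sum>y\<in>{y \<in> S - {a}. y \<in> N a}. acc n a y / deg a)"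
    by (rule sum.inter_filter[symmetric]) (use finS in simp)
  have s3: "{y \<in> S - {a}. y \<in> N a} = N a" using NS by blast
  have s4: "(\<Sum>y\<in>N a. acc n a y / deg a) = (\<Sum>y\<in>N a. acc n a y) / deg a"
    by (rule sum_divide_distrib[symmetric])
  have s5: "(\<Sum>y\<in>N a. acc n a y) = acc n a z + (\<Sum>y\<in>N a - {z}. acc n a y)"
    by (rule sum.remove[OF fN assms(2)])
  have s6: "(\<Sum>y\<in>N a - {z}. acc n a y) \<le> (\<Sum>y\<in>N a - {z}. 1)"
    by (rule sum_mono) (rule acc_le1[OF assms(3)])
  have "N a \<noteq> {}" using assms(2) by blast
  then have c1: "card (N a) \<ge> 1" using fN by (simp add: Suc_le_eq card_gt_0_iff)
  have s7: "(\<Sum>y\<in>N a - {z}. (1::real)) = deg a - 1"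
    using c1 assms(2) fN by (simp add: deg_def card_Diff_singleton of_nat_diff)
  define X where "X = (\<Sum>y\<in>N a. acc n a y)"
  have X: "X \<le> acc n a z + (deg a - 1)" unfolding X_def using s5 s6 s7 by linarith
  have Paa: "P n a a = 1 - X / deg a" unfolding X_def using r sp s1 s2 s3 s4 by simp
  have "X / deg a \<le> (acc n a z + (deg a - 1)) / deg a" using X dp by (simp add: divide_right_mono)
  moreover have "(acc n a z + (deg a - 1)) / deg a = 1 - (1 - acc n a z) / deg a"
    using dp by (simp add: diff_divide_distrib add_divide_distrib)
  ultimately show ?thesis using Paa by linarith
qed

lemma W3:
  assumes "a \<in> S" "lazy a"
  shows "eventually (\<lambda>n. P n a a \<ge> 1 / (2 * real (card S))) sequentially"
proof -
  obtain z where z: "z \<in> N a" "h z > h a" using assms(2) by (auto simp: lazy_def)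
  have ev1: "eventually (\<lambda>n. exp (- L n * (h z - h a)) \<le> 1/2) sequentially"
    using z(2) by (intro ev_exp_small) auto
  have ev: "eventually (\<lambda>n. exp (- L n * (h z - h a)) \<le> 1/2 \<and> 1 \<le> n) sequentially"
    by (rule eventually_conj[OF ev1 eventually_ge_at_top])
  show ?thesis
  proof (rule eventually_mono[OF ev])
    fix n assume en: "exp (- L n * (h z - h a)) \<le> 1/2 \<and> 1 \<le> n"
    have dp: "deg a > 0" using deg_pos assms(1) by auto
    have "max 0 (E a - E z) = h z - h a" using z(2) by (simp add: h_def)
    then have az: "acc n a z = exp (- L n * (h z - h a))" by (simp add: acc_def)
    have "P n a a \<ge> (1 - acc n a z) / deg a" using Paa_lower[OF assms(1) z(1)] en by blast
    moreover have "(1 - acc n a z) / deg a \<ge> (1/2) / deg a"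
      using az en dp by (intro divide_right_mono) auto
    moreover have "(1/2) / deg a \<ge> 1 / (2 * real (card S))"
      using dp deg_le[OF assms(1)] by (simp add: frac_le)
    ultimately show "P n a a \<ge> 1 / (2 * real (card S))" by linarith
  qed
qed

lemma from_weight:
  fixes w w0 X D :: real
  assumes "w0 > 0" "w \<ge> w0" "X \<ge> 0" "w * X \<le> 2 * D"
  shows "X \<le> 2 * D / w0"
proof -
  have "w0 * X \<le> w * X" using assms by (simp add: mult_right_mono)
  then have "w0 * X \<le> 2 * D" using assms by linarith
  then show ?thesis using assms(1) by (simp add: le_divide_eq mult.commute)
qed

lemma wt_bound:
  assumes "w \<ge> exp (- L n * C) / (2 * real (card S))" "w * (f a - f b)^2 \<le> 2 * D2 n f"
  shows "(f a - f b)^2 \<le> 4 * real (card S) * exp (L n * C) * D2 n f"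
proof -
  have cp: "real (card S) > 0" using finS Sne by (simp add: card_gt_0_iff)
  have "(f a - f b)^2 \<le> 2 * D2 n f / (exp (- L n * C) / (2 * real (card S)))"
    by (rule from_weight[OF _ assms(1) _ assms(2)]) (use cp in auto)
  also have "\<dots> = 4 * real (card S) * exp (L n * C) * D2 n f"
  proof -
    have e: "exp (- L n * C) = 1 / exp (L n * C)" by (simp add: exp_minus inverse_eq_divide)
    have ep: "exp (L n * C) > 0" by simp
    show ?thesis unfolding e using ep cp by (simp add: divide_simps)
  qed
  finally show ?thesis .
qed

lemma cert:
  assumes "stp a b"
  shows "eventually (\<lambda>n. \<forall>f. (f a - f b)^2 \<le> 4 * real (card S) * exp (L n * C) * D2 n f) sequentially"
proof -
  have cp: "real (card S) > 0" using finS Sne by (simp add: card_gt_0_iff)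
  consider (la) "a \<in> S" "b \<in> N a" "lazy a" | (lb) "a \<in> S" "b \<in> N a" "lazy b"
    | (nl) y where "y \<in> S" "\<not> lazy y" "a \<in> N y" "b \<in> N y"
    using assms unfolding stp_def by blast
  then show ?thesis
  proof cases
    case la
    have bS: "b \<in> S" using la N_sub by auto
    show ?thesis
    proof (rule eventually_mono[OF eventually_conj[OF W3[OF la(1,3)] eventually_ge_at_top[of 1]]], clarify)
      fix n f assume pa: "1 / (2 * real (card S)) \<le> P n a a" and n: "n \<ge> (1::nat)"
      have w2: "pt n a * P n a b \<ge> exp (- L n * C)" using W2[OF n la(1,2)] .
      have "exp (- L n * C) * (1 / (2 * real (card S))) \<le> (pt n a * P n a b) * P n a a"
        by (rule mult_mono[OF w2 pa]) (use mult_nonneg_nonneg[OF less_imp_le[OF pt_pos[OF la(1)]] P_nonneg] P_nonneg in auto)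
      then have w: "exp (- L n * C) / (2 * real (card S)) \<le> pt n a * P n a a * P n a b"
        by (simp add: algebra_simps)
      show "(f a - f b)^2 \<le> 4 * real (card S) * exp (L n * C) * D2 n f"
        by (rule wt_bound[OF w D2_term[OF la(1) la(1) bS]])
    qed
  next
    case lb
    have bS: "b \<in> S" using lb N_sub by auto
    have aN: "a \<in> N b" using lb bS N_sym by auto
    show ?thesis
    proof (rule eventually_mono[OF eventually_conj[OF W3[OF bS lb(3)] eventually_ge_at_top[of 1]]], clarify)
      fix n f assume pb: "1 / (2 * real (card S)) \<le> P n b b" and n: "n \<ge> (1::nat)"
      have w2: "pt n b * P n b a \<ge> exp (- L n * C)" using W2[OF n bS aN] .
      have "exp (- L n * C) * (1 / (2 * real (card S))) \<le> (pt n b * P n b a) * P n b b"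
        by (rule mult_mono[OF w2 pb]) (use mult_nonneg_nonneg[OF less_imp_le[OF pt_pos[OF bS]] P_nonneg] P_nonneg in auto)
      then have w: "exp (- L n * C) / (2 * real (card S)) \<le> pt n b * P n b a * P n b b"
        by (simp add: algebra_simps)
      show "(f a - f b)^2 \<le> 4 * real (card S) * exp (L n * C) * D2 n f"
        by (rule wt_bound[OF w D2_term[OF bS lb(1) bS]])
    qed
  next
    case nl
    have aS: "a \<in> S" and bS: "b \<in> S" using nl N_sub by auto
    show ?thesis
    proof (rule eventually_mono[OF eventually_ge_at_top[of 1]], clarify)
      fix n f assume n: "n \<ge> (1::nat)"
      have w: "exp (- L n * C) / (2 * real (card S)) \<le> pt n y * P n y a * P n y b"
        using W1[OF n nl] .
      show "(f a - f b)^2 \<le> 4 * real (card S) * exp (L n * C) * D2 n f"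
        by (rule wt_bound[OF w D2_term[OF nl(1) aS bS]])
    qed
  qed
qed

definition Rt :: "nat \<Rightarrow> (nat set \<Rightarrow> real) \<Rightarrow> real" where
  "Rt n f = 4 * real (card S) * exp (L n * C) * D2 n f"

lemma Rt_nonneg: "Rt n f \<ge> 0"
  unfolding Rt_def using D2_nonneg by simp

lemma walk:
  assumes "stp\<^sup>*\<^sup>* x z"
  shows "\<exists>l\<ge>0. eventually (\<lambda>n. \<forall>f. \<bar>f x - f z\<bar> \<le> l * sqrt (Rt n f)) sequentially"
  using assms
proof (induction rule: rtranclp_induct)
  case base
  show ?case by (rule exI[of _ 0]) simp
next
  case (step y z)
  obtain l where l: "l \<ge> 0" "eventually (\<lambda>n. \<forall>f. \<bar>f x - f y\<bar> \<le> l * sqrt (Rt n f)) sequentially"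
    using step.IH by blast
  have c: "eventually (\<lambda>n. \<forall>f. (f y - f z)^2 \<le> Rt n f) sequentially"
    using cert[OF step.hyps(2)] by (simp add: Rt_def)
  show ?case
  proof (intro exI[of _ "l + 1"] conjI)
    show "l + 1 \<ge> 0" using l by simp
    show "eventually (\<lambda>n. \<forall>f. \<bar>f x - f z\<bar> \<le> (l + 1) * sqrt (Rt n f)) sequentially"
    proof (rule eventually_mono[OF eventually_conj[OF l(2) c]], clarify)
      fix n f
      assume A: "\<forall>f. \<bar>f x - f y\<bar> \<le> l * sqrt (Rt n f)" and B: "\<forall>f. (f y - f z)^2 \<le> Rt n f"
      have "\<bar>f y - f z\<bar> \<le> sqrt (Rt n f)"
        using B real_sqrt_le_mono[OF B[rule_format, of f]] by simp
      then show "\<bar>f x - f z\<bar> \<le> (l + 1) * sqrt (Rt n f)"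
        using A[rule_format, of f] by (simp add: algebra_simps)
    qed
  qed
qed


definition eta :: real where "eta = Min (h ` (S - J))"

lemma eta_props:
  assumes "S - J \<noteq> {}"
  shows "eta > 0" "\<And>x. x \<in> S - J \<Longrightarrow> eta \<le> h x"
proof -
  have fin: "finite (h ` (S - J))" using finS by simp
  have pos: "\<And>x. x \<in> S - J \<Longrightarrow> h x > 0"
    using h_nonneg by (force simp: J_def)
  show "eta > 0" unfolding eta_def using fin assms pos by (simp add: Min_gr_iff)
  show "\<And>x. x \<in> S - J \<Longrightarrow> eta \<le> h x" unfolding eta_def using fin by simp
qed

definition NN :: "nat \<Rightarrow> (nat set \<Rightarrow> real) \<Rightarrow> real" where
  "NN n f = (\<Sum>y\<in>S. pt n y * (f y)^2)"

lemma NN_term: "y \<in> S \<Longrightarrow> pt n y * (f y)^2 \<le> NN n f"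
  unfolding NN_def by (rule member_le_sum) (auto simp: finS intro!: mult_nonneg_nonneg less_imp_le[OF pt_pos])

lemma NN_nonneg: "NN n f \<ge> 0"
  unfolding NN_def by (rule sum_nonneg) (auto intro!: mult_nonneg_nonneg less_imp_le[OF pt_pos])

lemma sq_split: "(a::real)^2 \<le> 2 * (a - b)^2 + 2 * b^2"
proof -
  have "2 * (a - b)^2 + 2 * b^2 - a^2 = (a - 2 * b)^2" by (simp add: power2_eq_square algebra_simps)
  moreover have "(a - 2 * b)^2 \<ge> 0" by simp
  ultimately show ?thesis by linarith
qed

lemma poinc_x:
  assumes x: "x \<in> S - J" and ne: "S - J \<noteq> {}"
  shows "eventually (\<lambda>n. \<forall>f. pt n x * (f x)^2 \<le> (real n + 1) / real (card S) * D2 n f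
            + 2 * real (card S) * exp (- L n * eta) * NN n f) sequentially"
proof -
  have xS: "x \<in> S" using x by simp
  obtain j where j: "j \<in> J" "stp\<^sup>*\<^sup>* x j" using reach_J xS by blast
  have jS: "j \<in> S" using j J_sub by auto
  have hj: "h j = 0" using j by (simp add: J_def)
  obtain l where l: "l \<ge> 0" "eventually (\<lambda>n. \<forall>f. \<bar>f x - f j\<bar> \<le> l * sqrt (Rt n f)) sequentially"
    using walk[OF j(2)] by blast
  have hx: "h x > 0" using eta_props[OF ne] x by (meson order.strict_trans2)
  define cS where "cS = real (card S)"
  have cS: "cS > 0" unfolding cS_def using finS Sne by (simp add: card_gt_0_iff)
  define K where "K = 8 * cS^3 * (l^2 + 1)"
  have Kp: "K > 0" unfolding K_def using cS by (intro mult_pos_pos) (auto intro: add_nonneg_pos)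
  have ev2: "eventually (\<lambda>n. exp (- L n * h x) \<le> 1 / K) sequentially"
    by (rule ev_exp_small) (use hx Kp in auto)
  show ?thesis
  proof (rule eventually_mono[OF eventually_conj[OF l(2) ev2]], clarify)
    fix n f
    assume W: "\<forall>f. \<bar>f x - f j\<bar> \<le> l * sqrt (Rt n f)" and e: "exp (- L n * h x) \<le> 1 / K"
    define e0 where "e0 = exp (- L n * h x)"
    define q where "q = exp (L n * C)"
    have q: "q = real n + 1" unfolding q_def by (rule expLC)
    have qp: "q > 0" unfolding q_def by simp
    have e0p: "e0 > 0" unfolding e0_def by simp
    define R where "R = Rt n f"
    have R: "R = 4 * cS * q * D2 n f" unfolding R_def Rt_def cS_def q_def by simp
    have Rn: "R \<ge> 0" unfolding R_def by (rule Rt_nonneg)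
    have D2n: "D2 n f \<ge> 0" by (rule D2_nonneg)
    have d1: "(f x - f j)^2 \<le> l^2 * R"
    proof -
      have "\<bar>f x - f j\<bar> \<le> l * sqrt R" using W unfolding R_def by blast
      then have "\<bar>f x - f j\<bar>^2 \<le> (l * sqrt R)^2" by (intro power_mono) auto
      then show ?thesis using Rn by (simp add: power_mult_distrib)
    qed
    have ptx: "pt n x \<le> cS * e0"
      unfolding pt_def e0_def cS_def using deg_le[OF xS] by (intro mult_right_mono) auto
    have ptx0: "pt n x \<ge> 0" using less_imp_le[OF pt_pos[OF xS]] .
    have ptj: "pt n j \<ge> 1"
    proof -
      have "N j \<noteq> {}" using N_ne jS by blast
      then have "card (N j) \<ge> 1" using finN[OF jS] by (simp add: Suc_le_eq card_gt_0_iff)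
      then show ?thesis using hj by (simp add: pt_def deg_def)
    qed
    have fj: "(f j)^2 \<le> NN n f"
    proof -
      have "(f j)^2 \<le> pt n j * (f j)^2" using ptj by (simp add: mult_le_cancel_right1)
      then show ?thesis using NN_term[OF jS, of n f] by linarith
    qed
    have B0: "2 * l^2 * R + 2 * (f j)^2 \<ge> 0" using Rn by simp
    have "pt n x * (f x)^2 \<le> pt n x * (2 * (f x - f j)^2 + 2 * (f j)^2)"
      by (rule mult_left_mono[OF sq_split ptx0])
    also have "\<dots> \<le> pt n x * (2 * l^2 * R + 2 * (f j)^2)"
      using d1 ptx0 by (intro mult_left_mono) auto
    also have "\<dots> \<le> cS * e0 * (2 * l^2 * R + 2 * (f j)^2)"
      by (rule mult_right_mono[OF ptx B0])
    also have "\<dots> = (8 * cS^2 * l^2 * e0) * (q * D2 n f) + 2 * cS * e0 * (f j)^2"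
      unfolding R by (simp add: power2_eq_square power3_eq_cube algebra_simps)
    also have "\<dots> \<le> (1 / cS) * (q * D2 n f) + 2 * cS * exp (- L n * eta) * NN n f"
    proof (rule add_mono)
      have "8 * cS^3 * l^2 * e0 \<le> 8 * cS^3 * l^2 * (1 / K)"
        using e unfolding e0_def using cS by (intro mult_left_mono) auto
      also have "\<dots> = l^2 / (l^2 + 1)" unfolding K_def using cS by (simp add: power3_eq_cube)
      also have "\<dots> \<le> 1" by (simp add: divide_le_eq_1 add_nonneg_pos)
      finally have "cS * (8 * cS^2 * l^2 * e0) \<le> 1" by (simp add: power3_eq_cube power2_eq_square algebra_simps)
      then have "8 * cS^2 * l^2 * e0 \<le> 1 / cS" using cS by (simp add: le_divide_eq mult.commute)
      then show "(8 * cS^2 * l^2 * e0) * (q * D2 n f) \<le> (1 / cS) * (q * D2 n f)"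
        using qp D2n by (intro mult_right_mono) auto
      have ee: "e0 \<le> exp (- L n * eta)"
        unfolding e0_def using eta_props[OF ne] x L_nonneg[of n] by (simp add: mult_left_mono)
      have "2 * cS * e0 * (f j)^2 \<le> 2 * cS * exp (- L n * eta) * (f j)^2"
        using ee cS by (intro mult_right_mono) auto
      also have "\<dots> \<le> 2 * cS * exp (- L n * eta) * NN n f"
        using fj cS by (intro mult_left_mono) auto
      finally show "2 * cS * e0 * (f j)^2 \<le> 2 * cS * exp (- L n * eta) * NN n f" .
    qed
    finally show "pt n x * (f x)^2 \<le> (real n + 1) / real (card S) * D2 n f
            + 2 * real (card S) * exp (- L n * eta) * NN n f"
      unfolding cS_def q by simp
  qed
qed

lemma poinc_sum:
  assumes ne: "S - J \<noteq> {}"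
  shows "eventually (\<lambda>n. \<forall>f. (\<Sum>x\<in>S - J. pt n x * (f x)^2) \<le> (real n + 1) * D2 n f
            + 2 * real (card S)^2 * exp (- L n * eta) * NN n f) sequentially"
proof -
  have ev: "eventually (\<lambda>n. \<forall>x\<in>S - J. \<forall>f. pt n x * (f x)^2 \<le> (real n + 1) / real (card S) * D2 n f
            + 2 * real (card S) * exp (- L n * eta) * NN n f) sequentially"
    by (rule eventually_ball_finite) (use finS poinc_x ne in auto)
  show ?thesis
  proof (rule eventually_mono[OF ev], clarify)
    fix n f
    assume A: "\<forall>x\<in>S - J. \<forall>f. pt n x * (f x)^2 \<le> (real n + 1) / real (card S) * D2 n f
            + 2 * real (card S) * exp (- L n * eta) * NN n f"
    define B where "B = (real n + 1) / real (card S) * D2 n f + 2 * real (card S) * exp (- L n * eta) * NN n f"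
    have cS: "real (card S) > 0" using finS Sne by (simp add: card_gt_0_iff)
    have B0: "B \<ge> 0" unfolding B_def using D2_nonneg NN_nonneg cS by (auto intro!: add_nonneg_nonneg mult_nonneg_nonneg)
    have "(\<Sum>x\<in>S - J. pt n x * (f x)^2) \<le> (\<Sum>x\<in>S - J. B)"
      by (rule sum_mono) (use A B_def in blast)
    also have "\<dots> = real (card (S - J)) * B" by simp
    also have "\<dots> \<le> real (card S) * B"
      using B0 finS by (intro mult_right_mono) (auto simp: card_mono)
    also have "\<dots> = real (card S) * ((real n + 1) / real (card S) * D2 n f) + real (card S) * (2 * real (card S) * exp (- L n * eta) * NN n f)"
      unfolding B_def by (simp add: distrib_left)
    also have "real (card S) * ((real n + 1) / real (card S) * D2 n f) = (real n + 1) * D2 n f"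
      using cS by simp
    also have "real (card S) * (2 * real (card S) * exp (- L n * eta) * NN n f) = 2 * real (card S)^2 * exp (- L n * eta) * NN n f"
      by (simp add: power2_eq_square mult.assoc mult.left_commute)
    finally show "(\<Sum>x\<in>S - J. pt n x * (f x)^2) \<le> (real n + 1) * D2 n f
            + 2 * real (card S)^2 * exp (- L n * eta) * NN n f" .
  qed
qed


lemma rowJ:
  assumes a: "a \<in> J" and n: "n \<ge> 1" and ne: "S - J \<noteq> {}"
  shows "(\<Sum>y\<in>S - J. P n a y) \<le> exp (- L n * eta)"
proof -
  have aS: "a \<in> S" using a J_sub by auto
  have ha: "h a = 0" using a by (simp add: J_def)
  have dp: "deg a > 0" using deg_pos aS by auto
  define c where "c = exp (- L n * eta) / deg a"
  have "(\<Sum>y\<in>S - J. P n a y) \<le> (\<Sum>y\<in>S - J. if y \<in> N a then c else 0)"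
  proof (rule sum_mono)
    fix y assume y: "y \<in> S - J"
    then have ya: "y \<noteq> a" using a by auto
    show "P n a y \<le> (if y \<in> N a then c else 0)"
    proof (cases "y \<in> N a")
      case True
      have "max 0 (E a - E y) = h y" using ha h_nonneg[of y] y by (simp add: h_def max_def)
      then have "acc n a y = exp (- L n * h y)" by (simp add: acc_def)
      also have "\<dots> \<le> exp (- L n * eta)"
        using eta_props(2)[OF ne y] L_nonneg[of n] by (simp add: mult_left_mono)
      finally have "acc n a y / deg a \<le> c" unfolding c_def using dp by (simp add: divide_right_mono)
      then show ?thesis using True P_off[OF aS n ya] by simp
    next
      case False
      then show ?thesis using P_off[OF aS n ya] by simp
    qed
  qed
  also have "\<dots> \<le> (\<Sum>y\<in>S. if y \<in> N a then c else 0)"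
    by (rule sum_mono2) (use finS c_def dp in auto)
  also have "\<dots> = (\<Sum>y\<in>{y \<in> S. y \<in> N a}. c)"
    by (rule sum.inter_filter[symmetric]) (use finS in simp)
  also have "{y \<in> S. y \<in> N a} = N a" using N_sub aS by blast
  also have "(\<Sum>y\<in>N a. c) = exp (- L n * eta)"
    unfolding c_def using dp by (simp add: deg_def)
  finally show ?thesis .
qed

lemma sumJc:
  assumes n: "n \<ge> 1" and ne: "S - J \<noteq> {}"
  shows "(\<Sum>y\<in>S - J. pt n y * (\<Sum>a\<in>S. P n y a * f a)^2)
     \<le> (\<Sum>a\<in>S - J. pt n a * (f a)^2) + exp (- L n * eta) * NN n f"
proof -
  define e where "e = exp (- L n * eta)"
  define Q where "Q a = (\<Sum>y\<in>S - J. P n a y)" for a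
  have fSJ: "finite (S - J)" using finS by simp
  have "(\<Sum>y\<in>S - J. pt n y * (\<Sum>a\<in>S. P n y a * f a)^2) \<le> (\<Sum>y\<in>S - J. pt n y * (\<Sum>a\<in>S. P n y a * (f a)^2))"
  proof (rule sum_mono)
    fix y assume y: "y \<in> S - J"
    have "(\<Sum>a\<in>S. P n y a * f a)^2 \<le> (\<Sum>a\<in>S. P n y a * (f a)^2)"
      by (rule jensen_sq[OF finS]) (use P_rowsum y P_nonneg in auto)
    then show "pt n y * (\<Sum>a\<in>S. P n y a * f a)^2 \<le> pt n y * (\<Sum>a\<in>S. P n y a * (f a)^2)"
      using pt_pos[of y n] y by (intro mult_left_mono) auto
  qed
  also have "\<dots> = (\<Sum>y\<in>S - J. \<Sum>a\<in>S. pt n y * P n y a * (f a)^2)"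
    by (simp add: sum_distrib_left mult.assoc)
  also have "\<dots> = (\<Sum>a\<in>S. \<Sum>y\<in>S - J. pt n y * P n y a * (f a)^2)"
    by (rule sum.swap)
  also have "\<dots> = (\<Sum>a\<in>S. \<Sum>y\<in>S - J. pt n a * (f a)^2 * P n a y)"
    by (intro sum.cong refl) (simp add: rev[OF _ _ n])
  also have "\<dots> = (\<Sum>a\<in>S. pt n a * (f a)^2 * Q a)"
    unfolding Q_def by (simp add: sum_distrib_left)
  also have "\<dots> = (\<Sum>a\<in>S - J. pt n a * (f a)^2 * Q a) + (\<Sum>a\<in>J. pt n a * (f a)^2 * Q a)"
    by (rule sum.subset_diff[OF J_sub finS])
  also have "\<dots> \<le> (\<Sum>a\<in>S - J. pt n a * (f a)^2) + (\<Sum>a\<in>J. pt n a * (f a)^2 * e)"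
  proof (rule add_mono)
    show "(\<Sum>a\<in>S - J. pt n a * (f a)^2 * Q a) \<le> (\<Sum>a\<in>S - J. pt n a * (f a)^2)"
    proof (rule sum_mono)
      fix a assume a: "a \<in> S - J"
      have "Q a \<le> (\<Sum>y\<in>S. P n a y)" unfolding Q_def
        by (rule sum_mono2) (use finS P_nonneg in auto)
      then have "Q a \<le> 1" using P_rowsum a by simp
      moreover have "pt n a * (f a)^2 \<ge> 0" using pt_pos[of a n] a by simp
      ultimately show "pt n a * (f a)^2 * Q a \<le> pt n a * (f a)^2"
        by (simp add: mult_left_le)
    qed
    show "(\<Sum>a\<in>J. pt n a * (f a)^2 * Q a) \<le> (\<Sum>a\<in>J. pt n a * (f a)^2 * e)"
    proof (rule sum_mono)
      fix a assume a: "a \<in> J"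
      have "Q a \<le> e" unfolding Q_def e_def by (rule rowJ[OF a n ne])
      moreover have "pt n a * (f a)^2 \<ge> 0" using pt_pos[of a n] a J_sub by auto
      ultimately show "pt n a * (f a)^2 * Q a \<le> pt n a * (f a)^2 * e"
        by (simp add: mult_left_mono)
    qed
  qed
  also have "(\<Sum>a\<in>J. pt n a * (f a)^2 * e) = e * (\<Sum>a\<in>J. pt n a * (f a)^2)"
    by (simp add: sum_distrib_left mult.commute)
  also have "(\<Sum>a\<in>J. pt n a * (f a)^2) \<le> NN n f"
    unfolding NN_def by (rule sum_mono2[OF finS J_sub]) (use pt_pos J_sub in \<open>auto intro!: mult_nonneg_nonneg less_imp_le[OF pt_pos]\<close>)
  then have "e * (\<Sum>a\<in>J. pt n a * (f a)^2) \<le> e * NN n f" unfolding e_def by (simp add: mult_left_mono)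
  finally show ?thesis unfolding e_def by simp
qed


definition mu :: "nat set \<Rightarrow> nat \<Rightarrow> nat set \<Rightarrow> real" where
  "mu V1 n x = pmf (sa_law E N C V1 n) x"
definition phi :: "nat set \<Rightarrow> nat \<Rightarrow> nat set \<Rightarrow> real" where
  "phi V1 n x = mu V1 n x / pt n x"
definition Nt :: "nat set \<Rightarrow> nat \<Rightarrow> real" where
  "Nt V1 n = NN n (phi V1 n)"

lemma mu_rec:
  assumes V1: "V1 \<in> S" and n: "n \<ge> 1" and y: "y \<in> S"
  shows "mu V1 (Suc n) y = pt n y * (\<Sum>a\<in>S. P n y a * phi V1 n a)"
proof -
  have "mu V1 (Suc n) y = (\<Sum>x\<in>S. mu V1 n x * P n x y)"
    unfolding mu_def by (rule law_rec[OF V1 n])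
  also have "\<dots> = (\<Sum>x\<in>S. phi V1 n x * (pt n x * P n x y))"
  proof (intro sum.cong refl)
    fix x assume x: "x \<in> S"
    have "pt n x \<noteq> 0" using pt_pos[of x n] x by simp
    then show "mu V1 n x * P n x y = phi V1 n x * (pt n x * P n x y)" by (simp add: phi_def)
  qed
  also have "\<dots> = (\<Sum>x\<in>S. phi V1 n x * (pt n y * P n y x))"
    by (intro sum.cong refl) (simp add: rev[OF _ y n])
  also have "\<dots> = pt n y * (\<Sum>a\<in>S. P n y a * phi V1 n a)"
    by (simp add: sum_distrib_left mult.commute mult.left_commute)
  finally show ?thesis .
qed

lemma ratio:
  assumes y: "y \<in> S"
  shows "pt n y / pt (Suc n) y \<le> (if y \<in> J then 1 else 1 + 1 / (real n + 1))"
proof -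
  have dp: "deg y > 0" using deg_pos y by auto
  have eq: "pt n y / pt (Suc n) y = exp ((L (Suc n) - L n) * h y)"
    using dp by (simp add: pt_def exp_diff[symmetric] algebra_simps)
  show ?thesis
  proof (cases "y \<in> J")
    case True
    then show ?thesis using eq by (simp add: J_def)
  next
    case False
    have "exp ((L (Suc n) - L n) * h y) \<le> exp ((L (Suc n) - L n) * C)"
      using L_mono[of n] h_le_C[OF y] by (simp add: mult_left_mono)
    also have "\<dots> = exp (L (Suc n) * C) / exp (L n * C)" by (simp add: exp_diff[symmetric] algebra_simps)
    also have "\<dots> = (real n + 2) / (real n + 1)" by (simp add: expLC)
    also have "\<dots> = 1 + 1 / (real n + 1)" by (simp add: field_simps)
    finally show ?thesis using eq False by simp
  qed
qed

lemma step_ineq: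
  assumes V1: "V1 \<in> S" and ne: "S - J \<noteq> {}"
  shows "eventually (\<lambda>n. Nt V1 (Suc n) \<le> Nt V1 n * (1 + (2 * real (card S)^2 + 1) * exp (- L n * eta) / (real n + 1))) sequentially"
proof (rule eventually_mono[OF eventually_conj[OF poinc_sum[OF ne] eventually_ge_at_top[of 1]]], clarify)
  fix n assume PS: "\<forall>f. (\<Sum>x\<in>S - J. pt n x * (f x)^2) \<le> (real n + 1) * D2 n f
            + 2 * real (card S)^2 * exp (- L n * eta) * NN n f" and n: "n \<ge> (1::nat)"
  define f where "f = phi V1 n"
  define psi where "psi y = (\<Sum>a\<in>S. P n y a * f a)" for y
  define T where "T y = pt n y * (psi y)^2" for y
  define r where "r y = pt n y / pt (Suc n) y" for y
  define e where "e = exp (- L n * eta)"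
  define k where "k = 2 * real (card S)^2"
  have T0: "\<And>y. y \<in> S \<Longrightarrow> T y \<ge> 0" unfolding T_def using pt_pos by (simp add: less_imp_le)
  have "Nt V1 (Suc n) = (\<Sum>y\<in>S. pt (Suc n) y * (mu V1 (Suc n) y / pt (Suc n) y)^2)"
    by (simp add: Nt_def NN_def phi_def)
  also have "\<dots> = (\<Sum>y\<in>S. r y * T y)"
  proof (intro sum.cong refl)
    fix y assume y: "y \<in> S"
    have p1: "pt (Suc n) y > 0" "pt n y > 0" using pt_pos y by auto
    show "pt (Suc n) y * (mu V1 (Suc n) y / pt (Suc n) y)^2 = r y * T y"
      unfolding mu_rec[OF V1 n y] r_def T_def psi_def f_def using p1
      by (simp add: power2_eq_square field_simps)
  qed
  also have "\<dots> = (\<Sum>y\<in>S - J. r y * T y) + (\<Sum>y\<in>J. r y * T y)"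
    by (rule sum.subset_diff[OF J_sub finS])
  also have "\<dots> \<le> (\<Sum>y\<in>S - J. T y + T y / (real n + 1)) + (\<Sum>y\<in>J. T y)"
  proof (rule add_mono)
    show "(\<Sum>y\<in>S - J. r y * T y) \<le> (\<Sum>y\<in>S - J. T y + T y / (real n + 1))"
    proof (rule sum_mono)
      fix y assume y: "y \<in> S - J"
      have "r y \<le> 1 + 1 / (real n + 1)" using ratio[of y n] y unfolding r_def by simp
      then have "r y * T y \<le> (1 + 1 / (real n + 1)) * T y" using T0[of y] y by (intro mult_right_mono) auto
      then show "r y * T y \<le> T y + T y / (real n + 1)" by (simp add: algebra_simps)
    qed
    show "(\<Sum>y\<in>J. r y * T y) \<le> (\<Sum>y\<in>J. T y)"
    proof (rule sum_mono)
      fix y assume y: "y \<in> J"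
      have "r y \<le> 1" using ratio[of y n] y J_sub unfolding r_def by auto
      moreover have "T y \<ge> 0" using T0[of y] y J_sub by auto
      ultimately show "r y * T y \<le> T y" using mult_right_mono[of "r y" 1 "T y"] by simp
    qed
  qed
  also have "\<dots> = (\<Sum>y\<in>S. T y) + (\<Sum>y\<in>S - J. T y) / (real n + 1)"
    by (simp add: sum.distrib sum_divide_distrib sum.subset_diff[OF J_sub finS, of T])
  also have "(\<Sum>y\<in>S. T y) = NN n f - D2 n f"
  proof -
    have "(\<Sum>y\<in>S. T y) = (\<Sum>y\<in>S. pt n y * (\<Sum>a\<in>S. P n y a * f a)^2)"
      unfolding T_def psi_def ..
    also have "\<dots> = (\<Sum>x\<in>S. pt n x * f x ^2)
     - (1/2) * (\<Sum>y\<in>S. \<Sum>a\<in>S. \<Sum>b\<in>S. pt n y * P n y a * P n y b * (f a - f b)^2)"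
      by (rule L2_identity[OF finS P_rowsum]) (use rev n in auto)
    finally show ?thesis by (simp add: NN_def D2_def)
  qed
  also have "(\<Sum>y\<in>S - J. T y) \<le> (real n + 1) * D2 n f + k * e * NN n f + e * NN n f"
  proof -
    have "(\<Sum>y\<in>S - J. T y) \<le> (\<Sum>a\<in>S - J. pt n a * (f a)^2) + e * NN n f"
      unfolding T_def psi_def e_def by (rule sumJc[OF n ne])
    also have "(\<Sum>a\<in>S - J. pt n a * (f a)^2) \<le> (real n + 1) * D2 n f + k * e * NN n f"
      using PS unfolding k_def e_def by blast
    finally show ?thesis by simp
  qed
  then have "(\<Sum>y\<in>S - J. T y) / (real n + 1) \<le> ((real n + 1) * D2 n f + k * e * NN n f + e * NN n f) / (real n + 1)"
    by (simp add: divide_right_mono)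
  finally have "Nt V1 (Suc n) \<le> NN n f - D2 n f + ((real n + 1) * D2 n f + k * e * NN n f + e * NN n f) / (real n + 1)"
    by simp
  also have "\<dots> = NN n f * (1 + (k + 1) * e / (real n + 1))"
    by (simp add: field_simps)
  finally show "Nt V1 (Suc n) \<le> Nt V1 n * (1 + (2 * real (card S)^2 + 1) * exp (- L n * eta) / (real n + 1))"
    unfolding Nt_def f_def k_def e_def .
qed


lemma summable_c:
  assumes "eta > 0"
  shows "summable (\<lambda>n. K * exp (- L n * eta) / (real n + 1))"
proof -
  define s where "s = - eta / C - 1"
  have s: "s < -1" unfolding s_def using assms Cpos by (simp add: divide_pos_pos)
  have eq: "exp (- L n * eta) / (real n + 1) = (real n + 1) powr s" for n
  proof -
    have "(real n + 1) powr s = exp (s * ln (real n + 1))" by (simp add: powr_def)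
    also have "s * ln (real n + 1) = - L n * eta + - ln (real n + 1)"
      unfolding s_def L_def using Cpos by (simp add: field_simps)
    also have "exp (- L n * eta + - ln (real n + 1)) = exp (- L n * eta) * exp (- ln (real n + 1))"
      by (rule exp_add)
    also have "exp (- ln (real n + 1)) = 1 / (real n + 1)"
      by (simp add: exp_minus inverse_eq_divide)
    finally show ?thesis by simp
  qed
  have "summable (\<lambda>n. real n powr s)" using summable_real_powr_iff s by blast
  then have "summable (\<lambda>n. real (Suc n) powr s)" by (subst summable_Suc_iff)
  then have "summable (\<lambda>n. (real n + 1) powr s)" by (simp add: add.commute)
  then have "summable (\<lambda>n. K * (real n + 1) powr s)" by (rule summable_mult)
  then show ?thesis by (simp add: eq[symmetric])
qed

lemma exp_tendsto0: "(\<lambda>n. exp (- L n * eta)) \<longlonglongrightarrow> 0" if "eta > 0"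
proof (rule order_tendstoI)
  fix a :: real assume "a < 0"
  then show "eventually (\<lambda>n. a < exp (- L n * eta)) sequentially"
    by (intro always_eventually) (simp add: less_trans[OF _ exp_gt_zero])
next
  fix a :: real assume a: "a > 0"
  have "eventually (\<lambda>n. exp (- L n * eta) \<le> a / 2) sequentially"
    by (rule ev_exp_small) (use that a in auto)
  then show "eventually (\<lambda>n. exp (- L n * eta) < a) sequentially"
    by (rule eventually_mono) (use a in auto)
qed

lemma prob_split:
  assumes V1: "V1 \<in> S"
  shows "measure_pmf.prob (sa_law E N C V1 n) J = 1 - (\<Sum>x\<in>S - J. mu V1 n x)"
proof -
  have fJ: "finite J" using finS J_sub finite_subset by blast
  have "1 = (\<Sum>x\<in>S. mu V1 n x)" unfolding mu_def by (rule sum_pmf_eq_1[OF finS law_set[OF V1], symmetric])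
  also have "\<dots> = (\<Sum>x\<in>S - J. mu V1 n x) + (\<Sum>x\<in>J. mu V1 n x)"
    by (rule sum.subset_diff[OF J_sub finS])
  finally have "(\<Sum>x\<in>J. mu V1 n x) = 1 - (\<Sum>x\<in>S - J. mu V1 n x)" by simp
  then show ?thesis by (simp add: measure_measure_pmf_finite[OF fJ] mu_def)
qed

lemma conv:
  assumes V1: "V1 \<in> S"
  shows "(\<lambda>n. measure_pmf.prob (sa_law E N C V1 n) J) \<longlonglongrightarrow> 1"
proof (cases "S - J = {}")
  case True
  have "\<And>n. measure_pmf.prob (sa_law E N C V1 n) J = 1"
    using prob_split[OF V1] True by (metis sum.empty diff_zero)
  then show ?thesis by simp
next
  case ne: False
  have etap: "eta > 0" using eta_props(1)[OF ne] .
  define cS where "cS = real (card S)"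
  have cS: "cS > 0" unfolding cS_def using finS Sne by (simp add: card_gt_0_iff)
  define c where "c n = (2 * cS^2 + 1) * exp (- L n * eta) / (real n + 1)" for n
  have c0: "c n \<ge> 0" for n unfolding c_def by simp
  have sm: "summable c" unfolding c_def by (rule summable_c[OF etap])
  obtain n0 where n0: "\<And>n. n \<ge> n0 \<Longrightarrow> Nt V1 (Suc n) \<le> Nt V1 n * (1 + c n)"
    using step_ineq[OF V1 ne] unfolding c_def cS_def eventually_sequentially by blast
  have Nt0: "Nt V1 n \<ge> 0" for n unfolding Nt_def by (rule NN_nonneg)
  define B where "B = Nt V1 n0 * exp (suminf c)"
  have NtB: "\<And>n. n \<ge> n0 \<Longrightarrow> Nt V1 n \<le> B"
    unfolding B_def by (rule bounded_growth[of n0 "Nt V1" c, OF n0 c0 Nt0 sm])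
  have B0: "B \<ge> 0" unfolding B_def using Nt0 by simp
  define p where "p n = (\<Sum>x\<in>S - J. mu V1 n x)" for n
  have p0: "p n \<ge> 0" for n unfolding p_def mu_def by (simp add: sum_nonneg)
  have pb: "p n \<le> sqrt (cS^2 * B * exp (- L n * eta))" if n: "n \<ge> n0" for n
  proof -
    have ptp: "\<And>x. x \<in> S \<Longrightarrow> pt n x > 0" using pt_pos by blast
    have "(p n)^2 = (\<Sum>x\<in>S - J. sqrt (pt n x) * (mu V1 n x / sqrt (pt n x)))^2"
    proof -
      have "sqrt (pt n x) * (mu V1 n x / sqrt (pt n x)) = mu V1 n x" if x: "x \<in> S - J" for x
      proof -
        have "sqrt (pt n x) > 0" using ptp x by simp
        then show ?thesis by simp
      qed
      then have "(\<Sum>x\<in>S - J. sqrt (pt n x) * (mu V1 n x / sqrt (pt n x))) = (\<Sum>x\<in>S - J. mu V1 n x)"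
        by (intro sum.cong refl)
      then show ?thesis unfolding p_def by simp
    qed
    also have "\<dots> \<le> (\<Sum>x\<in>S - J. (sqrt (pt n x))^2) * (\<Sum>x\<in>S - J. (mu V1 n x / sqrt (pt n x))^2)"
      by (rule Cauchy_Schwarz_ineq_sum)
    also have "(\<Sum>x\<in>S - J. (sqrt (pt n x))^2) = (\<Sum>x\<in>S - J. pt n x)"
      by (intro sum.cong refl) (use ptp in \<open>simp add: less_imp_le\<close>)
    also have "(\<Sum>x\<in>S - J. (mu V1 n x / sqrt (pt n x))^2) = (\<Sum>x\<in>S - J. pt n x * (phi V1 n x)^2)"
    proof (intro sum.cong refl)
      fix x assume x: "x \<in> S - J"
      have pp: "pt n x > 0" using ptp x by simp
      show "(mu V1 n x / sqrt (pt n x))^2 = pt n x * (phi V1 n x)^2"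
        using pp by (simp add: phi_def power_divide power2_eq_square)
    qed
    finally have cs: "(p n)^2 \<le> (\<Sum>x\<in>S - J. pt n x) * (\<Sum>x\<in>S - J. pt n x * (phi V1 n x)^2)" .
    have b1: "(\<Sum>x\<in>S - J. pt n x * (phi V1 n x)^2) \<le> Nt V1 n"
      unfolding Nt_def NN_def
      by (rule sum_mono2) (simp_all add: finS ptp[THEN less_imp_le])
    have b2: "(\<Sum>x\<in>S - J. pt n x) \<le> cS^2 * exp (- L n * eta)"
    proof -
      have "(\<Sum>x\<in>S - J. pt n x) \<le> (\<Sum>x\<in>S - J. cS * exp (- L n * eta))"
      proof (rule sum_mono)
        fix x assume x: "x \<in> S - J"
        have "exp (- L n * h x) \<le> exp (- L n * eta)"
          using eta_props(2)[OF ne x] L_nonneg[of n] by (simp add: mult_left_mono)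
        then show "pt n x \<le> cS * exp (- L n * eta)"
          unfolding pt_def cS_def using deg_le[of x] x deg_pos[of x] by (intro mult_mono) auto
      qed
      also have "\<dots> = real (card (S - J)) * (cS * exp (- L n * eta))" by simp
      also have "\<dots> \<le> cS * (cS * exp (- L n * eta))"
        unfolding cS_def using finS by (intro mult_right_mono) (auto simp: card_mono)
      finally show ?thesis by (simp add: power2_eq_square mult.assoc)
    qed
    have a0: "(\<Sum>x\<in>S - J. pt n x) \<ge> 0" by (rule sum_nonneg) (simp add: ptp[THEN less_imp_le])
    have b0: "(\<Sum>x\<in>S - J. pt n x * (phi V1 n x)^2) \<ge> 0"
      by (rule sum_nonneg) (simp add: ptp[THEN less_imp_le])
    have "(p n)^2 \<le> cS^2 * exp (- L n * eta) * Nt V1 n"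
      using cs mult_mono[OF b2 b1 _ b0] by simp
    also have "\<dots> \<le> cS^2 * exp (- L n * eta) * B"
      using NtB[OF n] by (intro mult_left_mono) auto
    finally show ?thesis by (intro real_le_rsqrt) (simp add: algebra_simps)
  qed
  have lim0: "(\<lambda>n. sqrt (cS^2 * B * exp (- L n * eta))) \<longlonglongrightarrow> 0"
  proof -
    have "(\<lambda>n. sqrt (cS^2 * B * exp (- L n * eta))) \<longlonglongrightarrow> sqrt (cS^2 * B * 0)"
      by (intro tendsto_intros exp_tendsto0[OF etap])
    then show ?thesis by simp
  qed
  have "p \<longlonglongrightarrow> 0"
  proof (rule tendsto_sandwich[OF _ _ tendsto_const lim0])
    show "eventually (\<lambda>n. 0 \<le> p n) sequentially" using p0 by simp
    show "eventually (\<lambda>n. p n \<le> sqrt (cS^2 * B * exp (- L n * eta))) sequentially"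
      using pb unfolding eventually_sequentially by blast
  qed
  then have "(\<lambda>n. 1 - p n) \<longlonglongrightarrow> 1 - 0" by (intro tendsto_intros)
  then show ?thesis by (simp add: prob_split[OF V1] p_def)
qed

lemma J_alt: "J = {x \<in> S. \<forall>w\<in>S. E w \<le> E x}"
proof -
  obtain z where z: "z \<in> S" "E z = Emax" using Emax_ex by blast
  show ?thesis unfolding J_def h_def using E_le_Emax z by force
qed

end



lemma mth_bound:
  assumes V: "V \<subseteq> {1..K}" "card V = m" and m: "1 \<le> m" "m \<le> K"
  shows "Min (u ` V) \<le> mth_largest u K m"
proof (rule ccontr)
  define xs where "xs = sort (map u [1..<K+1])"
  have lxs: "length xs = K" unfolding xs_def by simp
  define v where "v = xs ! (K - m)"
  have mth: "mth_largest u K m = v"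
    unfolding mth_largest_def v_def xs_def[symmetric] using m lxs
    by (simp add: rev_nth)
  have finV: "finite V" using V finite_subset by blast
  have Vne: "V \<noteq> {}" using V m by auto
  assume "\<not> Min (u ` V) \<le> mth_largest u K m"
  then have gt: "\<forall>k\<in>V. v < u k" using finV Vne mth by (simp add: Min_gr_iff not_le)
  define A where "A = {k \<in> {1..K}. v < u k}"
  have "V \<subseteq> A" using gt V unfolding A_def by auto
  then have cA: "m \<le> card A" using V(2) card_mono[of A V] unfolding A_def by auto
  have "card A = length (filter (\<lambda>k. v < u k) [1..<K+1])"
  proof -
    have "card A = card (set (filter (\<lambda>k. v < u k) [1..<K+1]))"
      unfolding A_def by (intro arg_cong[where f=card]) auto
    also have "\<dots> = length (filter (\<lambda>k. v < u k) [1..<K+1])"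
      by (rule distinct_card) simp
    finally show ?thesis .
  qed
  also have "\<dots> = length (filter (\<lambda>x. v < x) (map u [1..<K+1]))"
    by (simp add: filter_map o_def)
  also have "\<dots> = length (filter (\<lambda>x. v < x) xs)"
    unfolding xs_def by (simp add: filter_sort)
  also have "\<dots> = card {i. i < length xs \<and> v < xs ! i}"
    by (rule length_filter_conv_card)
  also have "\<dots> \<le> card {K - m + 1..<K}"
  proof (rule card_mono)
    show "{i. i < length xs \<and> v < xs ! i} \<subseteq> {K - m + 1..<K}"
    proof
      fix i assume i: "i \<in> {i. i < length xs \<and> v < xs ! i}"
      have "\<not> i \<le> K - m"
      proof
        assume "i \<le> K - m"
        then have "xs ! i \<le> xs ! (K - m)"
          using lxs m unfolding xs_def by (intro sorted_nth_mono) auto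
        then show False using i v_def by simp
      qed
      then show "i \<in> {K - m + 1..<K}" using i lxs by auto
    qed
  qed simp
  also have "\<dots> = m - 1" using m by simp
  finally show False using cA m by linarith
qed


lemma argmin_prop:
  assumes V: "V \<subseteq> {1..K}" "V \<noteq> {}" and inj: "inj_on rk {1..K}"
  shows "argmin_u u rk V \<in> V \<and> (\<forall>k'\<in>V. k' \<noteq> argmin_u u rk V \<longrightarrow>
     u (argmin_u u rk V) < u k' \<or> (u (argmin_u u rk V) = u k' \<and> rk (argmin_u u rk V) < rk k'))"
proof -
  define Q where "Q k \<longleftrightarrow> k \<in> V \<and> (\<forall>k'\<in>V. k' \<noteq> k \<longrightarrow> u k < u k' \<or> (u k = u k' \<and> rk k < rk k'))" for k
  have finV: "finite V" using V finite_subset by blast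
  define m0 where "m0 = Min (u ` V)"
  define W where "W = {k \<in> V. u k = m0}"
  have m0in: "m0 \<in> u ` V" unfolding m0_def using finV V by (intro Min_in) auto
  have Wne: "W \<noteq> {}" using m0in unfolding W_def by auto
  have finW: "finite W" using finV unfolding W_def by simp
  define r0 where "r0 = Min (rk ` W)"
  have "r0 \<in> rk ` W" unfolding r0_def using finW Wne by (intro Min_in) auto
  then obtain a where a: "a \<in> W" "rk a = r0" by auto
  have Qa: "Q a"
    unfolding Q_def
  proof (intro conjI ballI impI)
    show "a \<in> V" using a W_def by auto
    fix k' assume k': "k' \<in> V" "k' \<noteq> a"
    have "u a \<le> u k'" using a k' finV unfolding W_def m0_def by auto
    moreover have "u a = u k' \<Longrightarrow> rk a < rk k'"
    proof -
      assume eq: "u a = u k'"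
      then have "k' \<in> W" using a k' unfolding W_def by auto
      then have "rk a \<le> rk k'" using a finW unfolding r0_def by auto
      moreover have "rk a \<noteq> rk k'" using inj k' a V unfolding W_def inj_on_def by blast
      ultimately show "rk a < rk k'" by simp
    qed
    ultimately show "u a < u k' \<or> (u a = u k' \<and> rk a < rk k')" by fastforce
  qed
  have uniq: "\<And>k. Q k \<Longrightarrow> k = a"
  proof (rule ccontr)
    fix k assume Qk: "Q k" and ne: "k \<noteq> a"
    have 1: "u k < u a \<or> (u k = u a \<and> rk k < rk a)" using Qk Qa ne unfolding Q_def by auto
    have 2: "u a < u k \<or> (u a = u k \<and> rk a < rk k)" using Qk Qa ne unfolding Q_def by auto
    from 1 2 show False by auto
  qed
  have "argmin_u u rk V = a"
    unfolding argmin_u_def using Qa uniq unfolding Q_def by (intro the_equality) blast+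
  then show ?thesis using Qa unfolding Q_def by simp
qed

lemma swap_vertex:
  assumes V: "V \<in> vertices K m" and a: "a \<in> V" and b: "b \<in> {1..K}" "b \<notin> V"
  shows "insert b (V - {a}) \<in> vertices K m" "card (V \<inter> insert b (V - {a})) = m - 1"
        "V - insert b (V - {a}) = {a}"
proof -
  have Vs: "V \<subseteq> {1..K}" "card V = m" using V by (auto simp: vertices_def)
  have finV: "finite V" using Vs finite_subset by blast
  have ab: "a \<noteq> b" using a b by auto
  have cp: "card V > 0" using a finV by (auto simp: card_gt_0_iff)
  have "card (insert b (V - {a})) = m" using finV a b Vs cp by (simp add: card_Diff_singleton)
  then show "insert b (V - {a}) \<in> vertices K m" using Vs a b by (auto simp: vertices_def)
  have "V \<inter> insert b (V - {a}) = V - {a}" using b by auto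
  then show "card (V \<inter> insert b (V - {a})) = m - 1" using finV a Vs by (simp add: card_Diff_singleton)
  show "V - insert b (V - {a}) = {a}" using a ab by auto
qed

lemma swap_nbr:
  assumes V: "V \<in> vertices K m" and b: "b \<in> {1..K}" "b \<notin> V" and inj: "inj_on rk {1..K}"
    and m: "1 \<le> m"
  shows "insert b (V - {argmin_u u rk V}) \<in> nbrs u rk K m V"
proof -
  have Vs: "V \<subseteq> {1..K}" "card V = m" using V by (auto simp: vertices_def)
  have Vne: "V \<noteq> {}" using Vs m by auto
  have a: "argmin_u u rk V \<in> V" using argmin_prop[OF Vs(1) Vne inj] by blast
  show ?thesis using swap_vertex[OF V a b]
    by (auto simp: nbrs_def active_nbr_def)
qed


definition ltk :: "(nat \<Rightarrow> real) \<Rightarrow> (nat \<Rightarrow> nat) \<Rightarrow> nat \<Rightarrow> nat \<Rightarrow> bool" where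
  "ltk u rk k k' \<longleftrightarrow> u k < u k' \<or> (u k = u k' \<and> rk k < rk k')"

definition rank :: "(nat \<Rightarrow> real) \<Rightarrow> (nat \<Rightarrow> nat) \<Rightarrow> nat \<Rightarrow> nat \<Rightarrow> nat" where
  "rank u rk K k = card {k' \<in> {1..K}. ltk u rk k' k}"

lemma rank_mono:
  assumes "k \<in> {1..K}" "ltk u rk k k''"
  shows "rank u rk K k < rank u rk K k''"
  unfolding rank_def
proof (rule psubset_card_mono)
  show "finite {k' \<in> {1..K}. ltk u rk k' k''}" by simp
  have "{k' \<in> {1..K}. ltk u rk k' k} \<subseteq> {k' \<in> {1..K}. ltk u rk k' k''}"
    using assms(2) unfolding ltk_def by auto
  moreover have "k \<in> {k' \<in> {1..K}. ltk u rk k' k''}" "k \<notin> {k' \<in> {1..K}. ltk u rk k' k}"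
    using assms unfolding ltk_def by auto
  ultimately show "{k' \<in> {1..K}. ltk u rk k' k} \<subset> {k' \<in> {1..K}. ltk u rk k' k''}" by blast
qed

lemma conn_T:
  assumes inj: "inj_on rk {1..K}" and m: "1 \<le> m" "m \<le> K"
  shows "\<exists>T\<in>vertices K m. \<forall>V\<in>vertices K m.
           (\<lambda>a b. a \<in> vertices K m \<and> b \<in> nbrs u rk K m a)\<^sup>*\<^sup>* V T"
proof -
  let ?S = "vertices K m"
  let ?G = "\<lambda>a b. a \<in> vertices K m \<and> b \<in> nbrs u rk K m a"
  let ?f = "\<lambda>V. sum (rank u rk K) V"
  have finS: "finite ?S" unfolding vertices_def
    by (rule finite_subset[of _ "Pow {1..K}"]) auto
  have "{1..m} \<in> ?S" using m unfolding vertices_def by auto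
  then have Sne: "?S \<noteq> {}" by blast
  have "Max (?f ` ?S) \<in> ?f ` ?S" using finS Sne by (intro Max_in) auto
  then obtain T where T: "T \<in> ?S" "?f T = Max (?f ` ?S)" by auto
  have Tmax: "\<And>V. V \<in> ?S \<Longrightarrow> ?f V \<le> ?f T" using T finS by simp
  have Ts: "T \<subseteq> {1..K}" "card T = m" using T by (auto simp: vertices_def)
  have finT: "finite T" using Ts finite_subset by blast
  have PT: "ltk u rk s t" if t: "t \<in> T" and s: "s \<in> {1..K}" "s \<notin> T" for t s
  proof (rule ccontr)
    assume nl: "\<not> ltk u rk s t"
    have st: "s \<noteq> t" using s t by auto
    have "rk s \<noteq> rk t" using inj st s t Ts unfolding inj_on_def by blast
    then have lt: "ltk u rk t s" using nl unfolding ltk_def by auto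
    have T': "insert s (T - {t}) \<in> ?S" using swap_vertex(1)[OF T(1) t s] .
    have "?f (insert s (T - {t})) = rank u rk K s + ?f (T - {t})"
      using finT s by simp
    moreover have "?f T = rank u rk K t + ?f (T - {t})"
      using finT t by (simp add: sum.remove)
    moreover have "rank u rk K t < rank u rk K s" using rank_mono[OF _ lt] t Ts by auto
    ultimately have "?f T < ?f (insert s (T - {t}))" by simp
    then show False using Tmax[OF T'] by simp
  qed
  have main: "\<And>V. V \<in> ?S \<Longrightarrow> m - card (V \<inter> T) = d \<Longrightarrow> ?G\<^sup>*\<^sup>* V T" for d
  proof (induction d rule: less_induct)
    case (less d V)
    have V: "V \<in> ?S" using less.prems by simp
    have Vs: "V \<subseteq> {1..K}" "card V = m" using V by (auto simp: vertices_def)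
    have finV: "finite V" using Vs finite_subset by blast
    show ?case
    proof (cases "V = T")
      case True then show ?thesis by simp
    next
      case False
      have Vne: "V \<noteq> {}" using Vs m by auto
      define a where "a = argmin_u u rk V"
      have aV: "a \<in> V" and amin: "\<And>k'. k' \<in> V \<Longrightarrow> k' \<noteq> a \<Longrightarrow> ltk u rk a k'"
        using argmin_prop[OF Vs(1) Vne inj] unfolding a_def ltk_def by auto
      have aT: "a \<notin> T"
      proof
        assume aT: "a \<in> T"
        have "V \<subseteq> T"
        proof
          fix v assume v: "v \<in> V"
          show "v \<in> T"
          proof (rule ccontr)
            assume vT: "v \<notin> T"
            have "ltk u rk v a" using PT[OF aT _ vT] v Vs by auto
            moreover have "ltk u rk a v" using amin v vT aT by auto
            ultimately show False unfolding ltk_def by auto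
          qed
        qed
        then have "V = T" using finT Vs Ts by (simp add: card_subset_eq)
        then show False using False by simp
      qed
      have "\<not> T \<subseteq> V"
      proof
        assume "T \<subseteq> V"
        then have "T = V" using finV Vs Ts by (simp add: card_subset_eq)
        then show False using False by simp
      qed
      then obtain t where t: "t \<in> T" "t \<notin> V" by blast
      have tK: "t \<in> {1..K}" using t Ts by auto
      define V' where "V' = insert t (V - {a})"
      have V'S: "V' \<in> ?S" unfolding V'_def by (rule swap_vertex(1)[OF V aV tK t(2)])
      have G1: "?G V V'" unfolding V'_def a_def using swap_nbr[OF V tK t(2) inj m(1)] V by simp
      have int: "V' \<inter> T = insert t (V \<inter> T)" unfolding V'_def using t aT by auto
      have c1: "card (V' \<inter> T) = Suc (card (V \<inter> T))"
        unfolding int using finV t by simp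
      have c2: "card (V \<inter> T) < m"
      proof -
        have le: "card (V \<inter> T) \<le> m" using Vs finV by (metis Int_lower1 card_mono)
        have "card (V \<inter> T) \<noteq> m"
        proof
          assume "card (V \<inter> T) = m"
          then have "V \<inter> T = V" using finV Vs by (intro card_subset_eq) auto
          then have "V \<subseteq> T" by blast
          then have "V = T" using finT Vs Ts by (simp add: card_subset_eq)
          then show False using False by simp
        qed
        then show ?thesis using le by simp
      qed
      have "m - card (V' \<inter> T) < d" using c1 c2 less.prems by simp
      then have "?G\<^sup>*\<^sup>* V' T" using less.IH V'S by blast
      then show ?thesis by (rule converse_rtranclp_into_rtranclp[where r="?G", OF G1])
    qed
  qed
  show ?thesis using main T(1) by blast
qed

lemma conn_all:
  assumes inj: "inj_on rk {1..K}" and m: "1 \<le> m" "m \<le> K"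
    and x: "x \<in> vertices K m" and y: "y \<in> vertices K m"
  shows "(\<lambda>a b. a \<in> vertices K m \<and> b \<in> nbrs u rk K m a)\<^sup>*\<^sup>* x y"
proof -
  let ?G = "\<lambda>a b. a \<in> vertices K m \<and> b \<in> nbrs u rk K m a"
  obtain T where T: "T \<in> vertices K m" "\<And>V. V \<in> vertices K m \<Longrightarrow> ?G\<^sup>*\<^sup>* V T"
    using conn_T[OF inj m, of u] by blast
  have sym: "?G\<inverse>\<inverse> \<le> ?G" by (auto simp: nbrs_def)
  have "?G\<^sup>*\<^sup>* y T" using T y by blast
  then have "(?G\<inverse>\<inverse>)\<^sup>*\<^sup>* T y" by (rule rtranclp_converseI)
  then have "?G\<^sup>*\<^sup>* T y" using rtranclp_mono[OF sym] by blast
  then show ?thesis using T(2)[OF x] by (rule rtranclp_trans[rotated])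
qed


lemma law_set_gen:
  assumes finS: "finite S" and Nsub: "\<And>x. x \<in> S \<Longrightarrow> N x \<subseteq> S" and Nne: "\<And>x. x \<in> S \<Longrightarrow> N x \<noteq> {}"
    and V1: "V1 \<in> S"
  shows "set_pmf (sa_law E N C V1 n) \<subseteq> S"
proof (induction n rule: nat_less_induct)
  case (1 n)
  have st: "\<And>x \<tau>. x \<in> S \<Longrightarrow> set_pmf (sa_step E N \<tau> x) \<subseteq> S"
  proof -
    fix x \<tau> assume x: "x \<in> S"
    have fx: "finite (N x)" using finS Nsub[OF x] finite_subset by blast
    have "N x \<subseteq> S" "N x \<noteq> {}" using Nsub[OF x] Nne[OF x] by auto
    then show "set_pmf (sa_step E N \<tau> x) \<subseteq> S"
      unfolding sa_step_def using fx x by (auto split: if_splits)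
  qed
  show ?case
  proof (cases n)
    case 0 then show ?thesis using V1 by simp
  next
    case (Suc j)
    show ?thesis
    proof (cases j)
      case 0 then show ?thesis using V1 Suc by simp
    next
      case (Suc i)
      have IH: "set_pmf (sa_law E N C V1 (Suc i)) \<subseteq> S" using 1 \<open>n = Suc j\<close> Suc by auto
      show ?thesis using IH st \<open>n = Suc j\<close> Suc by (auto simp: set_bind_pmf)
    qed
  qed
qed

lemma E_range_spec:
  assumes V: "V \<in> vertices K m" and W: "W \<in> vertices K m" and m: "1 \<le> m" "m \<le> K"
    and bg1: "bdd_above (range (case_prod Phig))" and bg2: "bdd_below (range (case_prod Phig))"
    and bp1: "bdd_above (range (case_prod Phip))" and bp2: "bdd_below (range (case_prod Phip))"
    and al: "\<alpha> > 0" and ga: "\<gamma> > 0"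
  shows "energy u g p Phig Phip \<alpha> \<gamma> V - energy u g p Phig Phip \<alpha> \<gamma> W \<le> temp_const u K m Phig Phip \<alpha> \<gamma>"
proof -
  have Vs: "V \<subseteq> {1..K}" "card V = m" and Ws: "W \<subseteq> {1..K}" "card W = m"
    using V W by (auto simp: vertices_def)
  have Wne: "W \<noteq> {}" using Ws m by auto
  have 1: "Min (u ` V) \<le> mth_largest u K m" by (rule mth_bound[OF Vs m])
  have 2: "Min (u ` {1..K}) \<le> Min (u ` W)"
    using Ws Wne by (intro Min_antimono) auto
  have g1: "Phig (restrict g V) V \<le> (SUP x. case_prod Phig x)"
    using cSUP_upper[of "(restrict g V, V)" UNIV "case_prod Phig"] bg1 by simp
  have g2: "(INF x. case_prod Phig x) \<le> Phig (restrict g W) W"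
    using cINF_lower[of "case_prod Phig" UNIV "(restrict g W, W)"] bg2 by simp
  have p1: "Phip (restrict p V) V \<le> (SUP x. case_prod Phip x)"
    using cSUP_upper[of "(restrict p V, V)" UNIV "case_prod Phip"] bp1 by simp
  have p2: "(INF x. case_prod Phip x) \<le> Phip (restrict p W) W"
    using cINF_lower[of "case_prod Phip" UNIV "(restrict p W, W)"] bp2 by simp
  have ag: "\<alpha> * (Phig (restrict g V) V - Phig (restrict g W) W) \<le> \<alpha> * fun_range_width Phig"
    unfolding fun_range_width_def using g1 g2 al by (intro mult_left_mono) auto
  have gp: "\<gamma> * (Phip (restrict p V) V - Phip (restrict p W) W) \<le> \<gamma> * fun_range_width Phip"
    unfolding fun_range_width_def using p1 p2 ga by (intro mult_left_mono) auto
  show ?thesis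
    unfolding energy_def temp_const_def using 1 2 ag gp by (simp add: algebra_simps)
qed

theorem theorem4:
  fixes K m :: nat
    and u g p :: "nat \<Rightarrow> real"
    and rk :: "nat \<Rightarrow> nat"
    and Phig Phip :: "(nat \<Rightarrow> real) \<Rightarrow> nat set \<Rightarrow> real"
    and \<alpha> \<gamma> :: real
    and V1 :: "nat set"
  assumes "1 \<le> m" and "m < K"
    and "inj_on rk {1..K}"
    and "bdd_above (range (case_prod Phig))" and "bdd_below (range (case_prod Phig))"
    and "bdd_above (range (case_prod Phip))" and "bdd_below (range (case_prod Phip))"
    and "\<alpha> > 0" and "\<gamma> > 0"
    and "V1 \<in> vertices K m"
  defines "E \<equiv> energy u g p Phig Phip \<alpha> \<gamma>"
    and "J \<equiv> {V \<in> vertices K m. \<forall>W \<in> vertices K m. energy u g p Phig Phip \<alpha> \<gamma> W \<le> energy u g p Phig Phip \<alpha> \<gamma> V}"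
  shows "(\<lambda>j. measure_pmf.prob
            (sa_law E (nbrs u rk K m) (temp_const u K m Phig Phip \<alpha> \<gamma>) V1 j) J)
         \<longlonglongrightarrow> 1"
proof -
  define S where "S = vertices K m"
  define NB where "NB = nbrs u rk K m"
  define Cc where "Cc = temp_const u K m Phig Phip \<alpha> \<gamma>"
  have m: "1 \<le> m" "m \<le> K" using assms(1,2) by auto
  have inj: "inj_on rk {1..K}" using assms(3) .
  have V1: "V1 \<in> S" using assms(10) unfolding S_def .
  have Jeq: "J = {x \<in> S. \<forall>w\<in>S. E w \<le> E x}" unfolding assms(11,12) S_def ..
  have finS: "finite S" unfolding S_def vertices_def
    by (rule finite_subset[of _ "Pow {1..K}"]) auto
  have Nsub: "\<And>x. x \<in> S \<Longrightarrow> NB x \<subseteq> S" unfolding NB_def S_def nbrs_def by auto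
  have Nne: "\<And>x. x \<in> S \<Longrightarrow> NB x \<noteq> {}"
  proof -
    fix x assume x: "x \<in> S"
    have xs: "x \<subseteq> {1..K}" "card x = m" using x by (auto simp: S_def vertices_def)
    have "\<not> {1..K} \<subseteq> x"
    proof
      assume "{1..K} \<subseteq> x"
      then have "card {1..K} \<le> card x" using xs finite_subset by (metis card_mono finite_atLeastAtMost)
      then show False using xs assms(2) by simp
    qed
    then obtain b where b: "b \<in> {1..K}" "b \<notin> x" by blast
    have "insert b (x - {argmin_u u rk x}) \<in> NB x"
      unfolding NB_def by (rule swap_nbr[OF _ b inj m(1)]) (use x S_def in simp)
    then show "NB x \<noteq> {}" by blast
  qed
  have Nsym: "\<And>x y. x \<in> S \<Longrightarrow> y \<in> S \<Longrightarrow> y \<in> NB x \<longleftrightarrow> x \<in> NB y"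
    unfolding NB_def S_def nbrs_def by auto
  have Nirr: "\<And>x. x \<in> S \<Longrightarrow> x \<notin> NB x"
  proof
    fix x assume x: "x \<in> S" and xx: "x \<in> NB x"
    have "card x = m" using x by (simp add: S_def vertices_def)
    then show False using xx m unfolding NB_def nbrs_def active_nbr_def by auto
  qed
  have Er: "\<And>x y. x \<in> S \<Longrightarrow> y \<in> S \<Longrightarrow> E x - E y \<le> Cc"
    unfolding S_def Cc_def assms(11)
    by (rule E_range_spec[OF _ _ m assms(4,5,6,7,8,9)])
  have conn: "\<And>x y. x \<in> S \<Longrightarrow> y \<in> S \<Longrightarrow> (\<lambda>a b. a \<in> S \<and> b \<in> NB a)\<^sup>*\<^sup>* x y"
    unfolding S_def NB_def by (rule conn_all[OF inj m])
  have Sne: "S \<noteq> {}" using V1 by blast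
  show ?thesis
  proof (cases "Cc > 0")
    case True
    have inst: "sa S NB E Cc"
      by (unfold_locales) (use finS Nsub Nne Nsym Nirr Er True Sne conn in auto)
    have "(\<lambda>n. measure_pmf.prob (sa_law E NB Cc V1 n) {x \<in> S. \<forall>w\<in>S. E w \<le> E x}) \<longlonglongrightarrow> 1"
      using sa.conv[OF inst V1] unfolding sa.J_alt[OF inst] .
    then show ?thesis unfolding Jeq NB_def Cc_def .
  next
    case False
    have "J = S"
    proof -
      have "\<And>x w. x \<in> S \<Longrightarrow> w \<in> S \<Longrightarrow> E w \<le> E x" using Er False by (meson diff_le_0_iff_le le_less_trans not_le)
      then show ?thesis unfolding Jeq by blast
    qed
    have "\<And>n. measure_pmf.prob (sa_law E NB Cc V1 n) S = 1"
    proof -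
      fix n
      have sp: "set_pmf (sa_law E NB Cc V1 n) \<subseteq> S" by (rule law_set_gen[OF finS Nsub Nne V1])
      show "measure_pmf.prob (sa_law E NB Cc V1 n) S = 1"
        using sum_pmf_eq_1[OF finS sp] by (simp add: measure_measure_pmf_finite[OF finS])
    qed
    then show ?thesis unfolding \<open>J = S\<close> NB_def Cc_def by simp
  qed
qed

end
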